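(* Let $N\geq 3$, $p>1$, $m\in\mathbb N$ and $\alpha_p:=\max\left\{0,\frac{p(N-2)-(N+2)}{2}\right\}$. For $\alpha>\alpha_p$ let $u_\alpha$ be the unique radial solution of $-\Delta u=|x|^\alpha|u|^{p-1}u$ in $B^N$, $u=0$ on $\partial B^N$, with exactly $m$ nodal sets and $u_\alpha(0)>0$; let $r_{1,\alpha}<\cdots<r_{m,\alpha}=1$ be its zeros in $(0,1]$. Let $v_\alpha(t):=\left(\frac{2}{\alpha+2}\right)^{\frac{2}{p-1}}u_\alpha\left(t^{\frac{2}{\alpha+2}}\right)$, $t\in[0,1]$, and let $t_{1,\alpha}$ be the smallest zero of $v_\alpha$ in $(0,1]$. Then there exist $\delta\in(0,1)$ and $\alpha_0>\alpha_p$ such that $t_{1,\alpha}\geq\delta$ for all $\alpha\geq\alpha_0$. In particular, $r_{i,\alpha}\to1$ as $\alpha\to\infty$ for each $i=1,\dots,m$.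
   Context: $B^N$ is the open unit ball in $\mathbb R^N$ centered at the origin; radial functions are identified with functions of the radius on $[0,1]$. A nodal set is a connected component of the set where the function does not vanish. *)

theory Defs
  imports "HOL-Analysis.Analysis"
begin

definition alpha_p :: "nat \<Rightarrow> real \<Rightarrow> real" where
  "alpha_p N p = max 0 ((p * (real N - 2) - (real N + 2)) / 2)"

text \<open>U (a function of the radius r in [0,1]) is a radial classical solution of
  -Delta u = |x|^alpha |u|^(p-1) u in the unit ball of R^N, u = 0 on the boundary:
  radial form u'' + (N-1)/r u' + r^alpha |u|^(p-1) u = 0 on (0,1), u'(0) = 0, u(1) = 0.\<close>
definition radial_henon_sol :: "nat \<Rightarrow> real \<Rightarrow> real \<Rightarrow> (real \<Rightarrow> real) \<Rightarrow> bool" where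
  "radial_henon_sol N p \<alpha> U \<longleftrightarrow>
     continuous_on {0..1} U \<and> U 1 = 0 \<and>
     (\<exists>U' U''.
        (\<forall>r\<in>{0..<1}. (U has_real_derivative U' r) (at r within {0..<1})) \<and>
        U' 0 = 0 \<and>
        (\<forall>r\<in>{0<..<1}. (U' has_real_derivative U'' r) (at r)) \<and>
        (\<forall>r\<in>{0<..<1}. U'' r + (real N - 1) / r * U' r
                          + r powr \<alpha> * \<bar>U r\<bar> powr (p - 1) * U r = 0))"

text \<open>Number of nodal sets of a radial function U on the unit ball: the connected
  components of the set where it does not vanish, in radial coordinates r in [0,1).\<close>
definition num_nodal_sets :: "(real \<Rightarrow> real) \<Rightarrow> nat" where
  "num_nodal_sets U = card (components {r \<in> {0..<1}. U r \<noteq> 0})"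

definition zeros01 :: "(real \<Rightarrow> real) \<Rightarrow> real set" where
  "zeros01 U = {r \<in> {0<..1}. U r = 0}"

definition ith_zero :: "(real \<Rightarrow> real) \<Rightarrow> nat \<Rightarrow> real" where
  "ith_zero U i = sorted_list_of_set (zeros01 U) ! (i - 1)"

end

theory Submission
  imports Defs
begin

lemma abs_powr_deriv:
  fixes r x :: real
  assumes r: "r > 1"
  shows "((\<lambda>x. \<bar>x\<bar> powr r) has_real_derivative (r * \<bar>x\<bar> powr (r - 1) * sgn x)) (at x)"
proof (cases "x = 0")
  case True
  have "((\<lambda>h. (\<bar>0 + h\<bar> powr r - \<bar>0\<bar> powr r) / h) \<longlongrightarrow> 0) (at 0)"
  proof -
    have lim: "((\<lambda>h::real. \<bar>h\<bar> powr (r - 1)) \<longlongrightarrow> 0) (at 0)"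
      using r by (intro tendsto_zero_powrI) (auto intro!: tendsto_eq_intros)
    have "((\<lambda>h::real. sgn h * \<bar>h\<bar> powr (r - 1)) \<longlongrightarrow> 0) (at 0)"
    proof (rule tendsto_0_le[OF lim, of _ 1])
      show "\<forall>\<^sub>F h in at 0. norm (sgn h * \<bar>h\<bar> powr (r - 1)) \<le> norm (\<bar>h\<bar> powr (r - 1)) * 1"
        by (auto simp: abs_mult sgn_if)
    qed
    moreover have "\<forall>\<^sub>F h in at (0::real). sgn h * \<bar>h\<bar> powr (r - 1) = (\<bar>0 + h\<bar> powr r - \<bar>0\<bar> powr r) / h"
      unfolding eventually_at
      apply (rule exI[of _ 1])
      apply (auto simp: powr_diff sgn_if)
      done
    ultimately show ?thesis by (rule Lim_transform_eventually)
  qed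
  then show ?thesis using True by (simp add: DERIV_def)
next
  case False
  show ?thesis
  proof (cases "x > 0")
    case True
    have ev: "\<forall>\<^sub>F y in nhds x. \<bar>y\<bar> powr r = y powr r"
      using eventually_nhds_in_open[of "{0<..}" x] True
      by (auto elim!: eventually_mono)
    have "((\<lambda>y. y powr r) has_real_derivative r * x powr (r - 1)) (at x)"
      using True by (rule has_real_derivative_powr)
    then show ?thesis using True
      by (subst DERIV_cong_ev[OF refl ev refl]) simp
  next
    case neg: False
    with False have xn: "x < 0" by simp
    have ev: "\<forall>\<^sub>F y in nhds x. \<bar>y\<bar> powr r = (-y) powr r"
      using eventually_nhds_in_open[of "{..<0}" x] xn
      by (auto elim!: eventually_mono)
    have "((\<lambda>y. (-y) powr r) has_real_derivative r * (-x) powr (r - 1) * (-1)) (at x)"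
      using xn by (auto intro!: derivative_eq_intros)
    then show ?thesis using xn
      by (subst DERIV_cong_ev[OF refl ev refl]) simp
  qed
qed


lemma abs_powr_mult_sgn: "\<bar>x::real\<bar> powr (p - 1) * x = \<bar>x\<bar> powr p * sgn x"
proof (cases "x = 0")
  case False
  then have "\<bar>x\<bar> powr (p - 1) = \<bar>x\<bar> powr p / \<bar>x\<bar>" by (simp add: powr_diff)
  then show ?thesis using False by (auto simp: sgn_if)
qed simp

locale osc =
  fixes V V' V'' :: "real \<Rightarrow> real" and M p :: real
  assumes p: "p > 1" and M2: "2 < M" and M3: "M \<le> 3"
    and dV: "\<And>t. 0 < t \<Longrightarrow> t < 1 \<Longrightarrow> (V has_real_derivative V' t) (at t)"
    and dV': "\<And>t. 0 < t \<Longrightarrow> t < 1 \<Longrightarrow> (V' has_real_derivative V'' t) (at t)"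
    and ode: "\<And>t. 0 < t \<Longrightarrow> t < 1 \<Longrightarrow> V'' t + (M - 1) / t * V' t + \<bar>V t\<bar> powr (p - 1) * V t = 0"
begin

definition E :: "real \<Rightarrow> real" where
  "E t = (V' t)\<^sup>2 / 2 + \<bar>V t\<bar> powr (p + 1) / (p + 1)"

lemma E_nonneg: "E t \<ge> 0"
  unfolding E_def using p by (auto intro!: add_nonneg_nonneg divide_nonneg_pos)

lemma Vprime_sq_le: "(V' t)\<^sup>2 \<le> 2 * E t"
  unfolding E_def using p by (simp add: divide_nonneg_pos)

lemma E_deriv:
  assumes "0 < t" "t < 1"
  shows "(E has_real_derivative (- (M - 1) / t * (V' t)\<^sup>2)) (at t)"
proof -
  have d1: "((\<lambda>x. \<bar>x\<bar> powr (p + 1)) has_real_derivative ((p + 1) * \<bar>V t\<bar> powr (p + 1 - 1) * sgn (V t))) (at (V t))"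
    using p by (intro abs_powr_deriv) simp
  have d2: "((\<lambda>s. \<bar>V s\<bar> powr (p + 1)) has_real_derivative ((p + 1) * \<bar>V t\<bar> powr (p + 1 - 1) * sgn (V t)) * V' t) (at t)"
    using DERIV_chain2[OF d1 dV[OF assms]] .
  have d3: "((\<lambda>s. (V' s)\<^sup>2 / 2) has_real_derivative (2 * V' t * V'' t / 2)) (at t)"
    using dV'[OF assms] by (auto intro!: derivative_eq_intros)
  have "(E has_real_derivative (2 * V' t * V'' t / 2 + ((p + 1) * \<bar>V t\<bar> powr (p + 1 - 1) * sgn (V t)) * V' t / (p + 1))) (at t)"
    unfolding E_def[abs_def]
    by (intro DERIV_add d3 DERIV_cdivide d2)
  moreover have "2 * V' t * V'' t / 2 + ((p + 1) * \<bar>V t\<bar> powr (p + 1 - 1) * sgn (V t)) * V' t / (p + 1)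
      = V' t * (V'' t + \<bar>V t\<bar> powr (p - 1) * V t)"
  proof -
    have "2 * V' t * V'' t / 2 + ((p + 1) * \<bar>V t\<bar> powr (p + 1 - 1) * sgn (V t)) * V' t / (p + 1)
      = V' t * (V'' t + \<bar>V t\<bar> powr p * sgn (V t))"
      using p by (simp add: field_simps)
    then show ?thesis by (simp add: abs_powr_mult_sgn)
  qed
  moreover have "V'' t + \<bar>V t\<bar> powr (p - 1) * V t = - ((M - 1) / t * V' t)"
    using ode[OF assms] by linarith
  ultimately have "(E has_real_derivative V' t * (- ((M - 1) / t * V' t))) (at t)"
    by simp
  then show ?thesis using assms by (rule_tac DERIV_cong) (auto simp: power2_eq_square field_simps)
qed

lemma E_antimono:
  assumes "0 < s" "s \<le> t" "t < 1"
  shows "E t \<le> E s"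
proof (rule DERIV_nonpos_imp_decreasing_open[OF assms(2)])
  fix x assume "s < x" "x < t"
  then show "\<exists>y. (E has_real_derivative y) (at x) \<and> y \<le> 0"
    using assms M2 E_deriv[of x]
    by (intro exI[of _ "- (M - 1) / x * (V' x)\<^sup>2"]) (auto intro!: divide_nonpos_pos mult_nonpos_nonneg)
next
  show "continuous_on {s..t} E"
    using assms E_deriv by (intro DERIV_continuous_on[where D="\<lambda>x. - (M - 1) / x * (V' x)\<^sup>2"]) 
      (auto intro: has_field_derivative_at_within)
qed

lemma G_deriv:
  assumes "0 < t" "t < 1"
  shows "((\<lambda>x. x powr (2 * (M - 1)) * E x) has_real_derivative
     ((M - 1) * t powr (2 * M - 3) * (2 * \<bar>V t\<bar> powr (p + 1) / (p + 1)))) (at t)"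
proof -
  have "((\<lambda>x. x powr (2 * (M - 1)) * E x) has_real_derivative
     (2 * (M - 1) * t powr (2 * (M - 1) - 1) * E t + t powr (2 * (M - 1)) * (- (M - 1) / t * (V' t)\<^sup>2))) (at t)"
    using DERIV_mult[OF has_real_derivative_powr[OF assms(1), of "2 * (M - 1)"] E_deriv[OF assms]] by (simp add: ac_simps)
  moreover have "2 * (M - 1) * t powr (2 * (M - 1) - 1) * E t + t powr (2 * (M - 1)) * (- (M - 1) / t * (V' t)\<^sup>2)
     = (M - 1) * t powr (2 * M - 3) * (2 * \<bar>V t\<bar> powr (p + 1) / (p + 1))"
  proof -
    have "t powr (2 * M - 3 + 1) = t powr (2 * M - 3) * t powr 1"
      by (rule powr_add)
    then have "t powr (2 * M - 3) * t = t powr (2 * M - 3 + 1)"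
      using assms by simp
    then have T: "t powr (2 * (M - 1)) = t powr (2 * M - 3) * t"
      by (simp add: algebra_simps)
    have X: "t powr (2 * (M - 1)) * (- (M - 1) / t * (V' t)\<^sup>2) = - (M - 1) * t powr (2 * M - 3) * (V' t)\<^sup>2"
      using assms by (subst T) (simp add: field_simps)
    have Y: "2 * (M - 1) - 1 = 2 * M - 3" by simp
    show ?thesis unfolding X Y unfolding E_def by (simp add: algebra_simps)
  qed
  ultimately show ?thesis by simp
qed

lemma G_mono:
  assumes "0 < s" "s \<le> t" "t < 1"
  shows "s powr (2 * (M - 1)) * E s \<le> t powr (2 * (M - 1)) * E t"
proof (rule DERIV_nonneg_imp_increasing_open[OF assms(2)])
  fix x assume x: "s < x" "x < t"
  then show "\<exists>y. ((\<lambda>x. x powr (2 * (M - 1)) * E x) has_real_derivative y) (at x) \<and> 0 \<le> y"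
    using assms M2 p G_deriv[of x]
    by (intro exI[of _ "(M - 1) * x powr (2 * M - 3) * (2 * \<bar>V x\<bar> powr (p + 1) / (p + 1))"]) 
      (auto intro!: mult_nonneg_nonneg divide_nonneg_pos)
next
  show "continuous_on {s..t} (\<lambda>x. x powr (2 * (M - 1)) * E x)"
    using assms G_deriv by (intro DERIV_continuous_on[where D="\<lambda>x. (M - 1) * x powr (2 * M - 3) * (2 * \<bar>V x\<bar> powr (p + 1) / (p + 1))"]) 
      (auto intro: has_field_derivative_at_within)
qed

lemma E_lower:
  assumes "0 < s" "s \<le> t" "t < 1"
  shows "s powr (2 * (M - 1)) * E s \<le> E t"
proof -
  have "t powr (2 * (M - 1)) \<le> 1"
    using assms M2 by (intro powr_le1) auto
  then have "t powr (2 * (M - 1)) * E t \<le> E t"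
    using E_nonneg[of t] by (simp add: mult_left_le_one_le)
  then show ?thesis using G_mono[OF assms] by linarith
qed

end

lemma ric_alg: "(t::real) \<noteq> 0 \<Longrightarrow> (-( (m/t) * w) - P - w^2 - m/(2*t^2)) + (w + m/(2*t))^2 = -P + m*(m-2)/(4*t^2)"
  by (simp add: field_simps power2_eq_square)

lemma aux_cancel: "(A::real) > 0 \<Longrightarrow> s \<noteq> 0 \<Longrightarrow> - A * q / (s * A) = - (q / s)"
  by (simp add: field_simps)

context osc begin

lemma V_cont: "0 < a \<Longrightarrow> b < 1 \<Longrightarrow> continuous_on {a..b} V"
  by (intro continuous_at_imp_continuous_on ballI DERIV_isCont[OF dV]) auto

lemma low_len:
  assumes "0 < a" "a \<le> b" "b < 1" "\<forall>t\<in>{a..b}. 0 < V t \<and> V t \<le> L"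
    "\<forall>t\<in>{a..b}. e \<le> E t" "0 < e" "L powr (p + 1) / (p + 1) \<le> e / 2"
  shows "b - a \<le> L / sqrt e"
proof (cases "a = b")
  case True then show ?thesis using assms by simp
next
  case False
  then have ab: "a < b" using assms by simp
  obtain z where z: "a < z" "z < b" "V b - V a = (b - a) * V' z"
    using MVT2[OF ab, of V V'] dV assms by force
  have Vz: "0 < V z" "V z \<le> L" using assms z by auto
  have "\<bar>V z\<bar> powr (p + 1) \<le> L powr (p + 1)"
    using Vz p by (intro powr_mono2) auto
  then have "\<bar>V z\<bar> powr (p + 1) / (p + 1) \<le> L powr (p + 1) / (p + 1)"
    using p by (intro divide_right_mono) auto
  moreover have "e \<le> E z" using assms z by auto
  ultimately have "e \<le> (V' z)\<^sup>2" using assms(7) unfolding E_def by linarith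
  then have se: "sqrt e \<le> \<bar>V' z\<bar>" using real_sqrt_le_mono[of e "(V' z)\<^sup>2"] by simp
  have "0 < V a" "V a \<le> L" "0 < V b" "V b \<le> L" using assms ab by auto
  then have "\<bar>V b - V a\<bar> \<le> L" by linarith
  then have "(b - a) * \<bar>V' z\<bar> \<le> L" using z ab by (simp add: abs_mult)
  moreover have "(b - a) * sqrt e \<le> (b - a) * \<bar>V' z\<bar>" using se ab by (intro mult_left_mono) auto
  ultimately have "(b - a) * sqrt e \<le> L" by linarith
  then show ?thesis using assms by (simp add: le_divide_eq)
qed

lemma high_len:
  assumes "0 < a" "a \<le> b" "b < 1" "\<forall>t\<in>{a..b}. L \<le> V t" "0 < L"
  shows "b - a \<le> pi / sqrt (L powr (p - 1))"
proof (cases "a = b")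
  case True then show ?thesis by simp
next
  case False
  then have ab: "a < b" using assms by simp
  define q where "q = L powr (p - 1)"
  have q: "q > 0" using assms by (simp add: q_def)
  define z where "z t = V' t / V t + (M - 1) / (2 * t)" for t
  define z' where "z' t = V'' t / V t - (V' t / V t)\<^sup>2 - (M - 1) / (2 * t\<^sup>2)" for t
  define \<phi> where "\<phi> t = arctan (z t / sqrt q)" for t
  define \<phi>' where "\<phi>' t = (z' t / sqrt q) / (1 + (z t / sqrt q)\<^sup>2)" for t
  have Vpos: "\<And>t. t \<in> {a..b} \<Longrightarrow> V t > 0" using assms by force
  have dz: "(z has_real_derivative z' t) (at t)" if t: "t \<in> {a..b}" for t
  proof -
    have t0: "0 < t" "t < 1" "V t \<noteq> 0" using t assms Vpos[OF t] by auto
    show ?thesis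
      unfolding z_def[abs_def] z'_def
      using t0 by (auto intro!: derivative_eq_intros dV' dV simp: field_simps power2_eq_square)
  qed
  have dphi: "(\<phi> has_real_derivative \<phi>' t) (at t)" if t: "t \<in> {a..b}" for t
  proof -
    have "(\<phi> has_real_derivative (inverse (1 + (z t / sqrt q)\<^sup>2)) * (z' t / sqrt q)) (at t)"
      unfolding \<phi>_def[abs_def]
      by (rule DERIV_chain2[OF DERIV_arctan DERIV_cdivide[OF dz[OF t]]])
    then show ?thesis unfolding \<phi>'_def by (simp add: field_simps)
  qed
  have key: "z' t \<le> - ((z t)\<^sup>2 + q)" if t: "t \<in> {a..b}" for t
  proof -
    have t0: "0 < t" "t < 1" using t assms by auto
    have Vt: "V t > 0" using Vpos[OF t] .
    have ode': "V'' t = - ((M - 1) / t * V' t) - V t powr (p - 1) * V t"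
      using ode[OF t0] Vt by simp
    have h1: "V'' t / V t = - ((M - 1) / t * (V' t / V t)) - V t powr (p - 1)"
      unfolding ode' using Vt by (simp add: diff_divide_distrib)
    have "z' t + (z t)\<^sup>2 = - (V t powr (p - 1)) + (M - 1) * ((M - 1) - 2) / (4 * t\<^sup>2)"
      unfolding z'_def z_def h1 using t0 by (intro ric_alg) simp
    then have "z' t + (z t)\<^sup>2 = - (V t powr (p - 1)) + (M - 1) * (M - 3) / (4 * t\<^sup>2)"
      by (simp add: algebra_simps)
    moreover have "(M - 1) * (M - 3) / (4 * t\<^sup>2) \<le> 0"
      using M2 M3 t0 by (intro divide_nonpos_pos mult_nonneg_nonpos) auto
    moreover have "q \<le> V t powr (p - 1)"
      unfolding q_def using assms t p by (intro powr_mono2) auto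
    ultimately show ?thesis by linarith
  qed
  have phile: "\<phi>' t \<le> - sqrt q" if t: "t \<in> {a..b}" for t
  proof -
    have sq: "sqrt q > 0" using q by simp
    have den: "1 + (z t / sqrt q)\<^sup>2 = (q + (z t)\<^sup>2) / q"
      using q sq by (simp add: field_simps power_divide)
    have "\<phi>' t = z' t * q / (sqrt q * (q + (z t)\<^sup>2))"
      unfolding \<phi>'_def den using q sq by (simp add: field_simps)
    also have "\<dots> \<le> - (q + (z t)\<^sup>2) * q / (sqrt q * (q + (z t)\<^sup>2))"
      using key[OF t] q sq by (intro divide_right_mono mult_right_mono) (auto intro: add_pos_nonneg)
    also have "\<dots> = - (q / sqrt q)"
      using q sq by (intro aux_cancel) (auto intro: add_pos_nonneg)
    also have "\<dots> = - sqrt q"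
      using q by (simp add: real_div_sqrt)
    finally show ?thesis .
  qed
  obtain x where x: "a < x" "x < b" "\<phi> b - \<phi> a = (b - a) * \<phi>' x"
    using MVT2[OF ab, of \<phi> \<phi>'] dphi by force
  have "(b - a) * \<phi>' x \<le> (b - a) * (- sqrt q)"
    using phile[of x] x ab by (intro mult_left_mono) auto
  moreover have "\<phi> b - \<phi> a > - pi"
    unfolding \<phi>_def using arctan_bounded[of "z b / sqrt q"] arctan_bounded[of "z a / sqrt q"] by linarith
  ultimately have "(b - a) * sqrt q < pi" using x by linarith
  then show ?thesis unfolding q_def[symmetric] using q by (simp add: pos_le_divide_eq less_imp_le mult.commute)
qed

end

context osc begin

lemma mvt:
  assumes "0 < a" "a < b" "b < 1"
  shows "\<exists>z. a < z \<and> z < b \<and> V b - V a = (b - a) * V' z"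
proof (rule MVT2[OF assms(2)])
  fix x assume "a \<le> x" "x \<le> b"
  then show "(V has_real_derivative V' x) (at x)" using assms by (intro dV) auto
qed

lemma g_dec:
  assumes "0 < x" "x < y" "y < 1" "\<forall>t\<in>{x..y}. V t > 0"
  shows "y powr (M - 1) * V' y < x powr (M - 1) * V' x"
proof -
  have "(\<lambda>t. t powr (M - 1) * V' t) y < (\<lambda>t. t powr (M - 1) * V' t) x"
  proof (rule DERIV_neg_imp_decreasing[OF assms(2)])
    fix t assume t: "x \<le> t" "t \<le> y"
    then have t0: "0 < t" "t < 1" using assms by auto
    have Vt: "V t > 0" using assms t by auto
    have D: "((\<lambda>t. t powr (M - 1) * V' t) has_real_derivative
        ((M - 1) * t powr (M - 1 - 1) * V' t + t powr (M - 1) * V'' t)) (at t)"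
      using DERIV_mult[OF has_real_derivative_powr[OF t0(1), of "M - 1"] dV'[OF t0]] by (simp add: ac_simps)
    have "(M - 1) * t powr (M - 1 - 1) * V' t + t powr (M - 1) * V'' t
        = t powr (M - 1) * (V'' t + (M - 1) / t * V' t)"
      using t0 by (simp add: powr_diff field_simps power2_eq_square)
    also have "\<dots> = - (t powr (M - 1) * (\<bar>V t\<bar> powr (p - 1) * V t))"
    proof -
      have "V'' t + (M - 1) / t * V' t = - (\<bar>V t\<bar> powr (p - 1) * V t)"
        using ode[OF t0] by linarith
      then show ?thesis by simp
    qed
    also have "\<dots> < 0" using Vt t0 by simp
    finally show "\<exists>y. ((\<lambda>t. t powr (M - 1) * V' t) has_real_derivative y) (at t) \<and> y < 0"
      using D by blast
  qed
  then show ?thesis by simp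
qed

lemma unimodal:
  assumes "0 < t1" "t1 \<le> s" "s \<le> t2" "t2 < 1" "\<forall>t\<in>{t1..t2}. V t > 0"
    "L \<le> V t1" "L \<le> V t2"
  shows "L \<le> V s"
proof (rule ccontr)
  assume "\<not> L \<le> V s"
  then have Vs: "V s < L" by simp
  then have s1: "t1 < s" using assms by (cases "t1 = s") auto
  have s2: "s < t2" using assms Vs by (cases "t2 = s") auto
  obtain x where x: "t1 < x" "x < s" "V s - V t1 = (s - t1) * V' x"
    using mvt[OF _ s1] assms s2 by auto
  obtain y where y: "s < y" "y < t2" "V t2 - V s = (t2 - s) * V' y"
    using mvt[OF _ s2] assms s1 by auto
  have "(s - t1) * V' x < 0" using x Vs assms by linarith
  then have "V' x < 0" using s1 by (simp add: mult_less_0_iff)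
  have "(t2 - s) * V' y > 0" using y Vs assms by linarith
  then have "V' y > 0" using s2 by (simp add: zero_less_mult_iff)
  have "y powr (M - 1) * V' y < x powr (M - 1) * V' x"
    using assms x y by (intro g_dec) auto
  moreover have "x powr (M - 1) * V' x < 0" using \<open>V' x < 0\<close> x assms by (simp add: mult_pos_neg)
  moreover have "y powr (M - 1) * V' y > 0" using \<open>V' y > 0\<close> y assms by simp
  ultimately show False by linarith
qed

lemma core:
  assumes "0 < a" "a \<le> b" "b < 1" "\<forall>t\<in>{a..b}. 0 < V t" "\<forall>t\<in>{a..b}. e \<le> E t" "0 < e"
    "0 < L" "L powr (p + 1) / (p + 1) \<le> e / 2"
  shows "b - a \<le> 2 * (L / sqrt e) + pi / sqrt (L powr (p - 1))"
proof -
  define K where "K = L / sqrt e"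
  have K0: "K \<ge> 0" using assms by (simp add: K_def)
  have pi0: "pi / sqrt (L powr (p - 1)) \<ge> 0" by simp
  have low: "d - c \<le> K" if "a \<le> c" "c \<le> d" "d \<le> b" "\<forall>t\<in>{c..d}. V t \<le> L" for c d
    unfolding K_def using that assms by (intro low_len) auto
  show ?thesis
  proof (cases "\<forall>t\<in>{a..b}. V t < L")
    case True
    then have "b - a \<le> K" using assms by (intro low) auto
    then show ?thesis using K0 pi0 unfolding K_def by linarith
  next
    case False
    define I where "I = {t \<in> {a..b}. L \<le> V t}"
    have Ine: "I \<noteq> {}" using False unfolding I_def by (auto simp: not_less)
    have Icl: "closed I" unfolding I_def
      by (intro continuous_on_closed_Collect_le V_cont assms continuous_on_const) auto
    have Ib: "bdd_below I" "bdd_above I" unfolding I_def by auto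
    define t1 where "t1 = Inf I"
    define t2 where "t2 = Sup I"
    have t1I: "t1 \<in> I" unfolding t1_def by (rule closed_contains_Inf[OF Ine Ib(1) Icl])
    have t2I: "t2 \<in> I" unfolding t2_def by (rule closed_contains_Sup[OF Ine Ib(2) Icl])
    have t12: "t1 \<le> t2" unfolding t1_def t2_def using Ine Ib by (meson cInf_le_cSup)
    have below: "V t < L" if "a \<le> t" "t < t1" for t
    proof (rule ccontr)
      assume "\<not> V t < L"
      then have "t \<in> I" using that t1I unfolding I_def by auto
      then have "t1 \<le> t" unfolding t1_def using Ib by (simp add: cInf_lower)
      then show False using that by simp
    qed
    have above: "V t < L" if "t2 < t" "t \<le> b" for t
    proof (rule ccontr)
      assume "\<not> V t < L"
      then have "t \<in> I" using that t2I unfolding I_def by auto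
      then have "t \<le> t2" unfolding t2_def using Ib by (simp add: cSup_upper)
      then show False using that by simp
    qed
    have p1: "t1 - a \<le> K"
    proof (rule ccontr)
      assume "\<not> t1 - a \<le> K"
      define c where "c = (t1 + a + K) / 2"
      have c1: "c < t1" "a \<le> c" using K0 \<open>\<not> t1 - a \<le> K\<close> unfolding c_def by auto
      have "\<forall>t\<in>{a..c}. V t \<le> L" using c1 below by (auto simp: less_imp_le)
      then have "c - a \<le> K" using t1I c1 unfolding I_def by (intro low) auto
      then show False using \<open>\<not> t1 - a \<le> K\<close> c_def by (simp add: field_simps)
    qed
    have p3: "b - t2 \<le> K"
    proof (rule ccontr)
      assume "\<not> b - t2 \<le> K"
      define c where "c = (t2 + b - K) / 2"
      have c1: "t2 < c" "c \<le> b" using K0 \<open>\<not> b - t2 \<le> K\<close> unfolding c_def by auto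
      have "\<forall>t\<in>{c..b}. V t \<le> L" using c1 above by (auto simp: less_imp_le)
      then have "b - c \<le> K" using t2I c1 unfolding I_def by (intro low) auto
      then show False using \<open>\<not> b - t2 \<le> K\<close> c_def by (simp add: field_simps)
    qed
    have p2: "t2 - t1 \<le> pi / sqrt (L powr (p - 1))"
    proof (rule high_len)
      show "\<forall>t\<in>{t1..t2}. L \<le> V t"
        using t1I t2I assms unfolding I_def
        by (auto intro!: unimodal[of t1 _ t2])
    qed (use t1I t2I assms t12 in \<open>auto simp: I_def\<close>)
    show ?thesis using p1 p2 p3 unfolding K_def by linarith
  qed
qed

lemma core_neg:
  assumes "0 < a" "a \<le> b" "b < 1" "\<forall>t\<in>{a..b}. V t < 0" "\<forall>t\<in>{a..b}. e \<le> E t" "0 < e"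
    "0 < L" "L powr (p + 1) / (p + 1) \<le> e / 2"
  shows "b - a \<le> 2 * (L / sqrt e) + pi / sqrt (L powr (p - 1))"
proof -
  interpret N: osc "\<lambda>t. - V t" "\<lambda>t. - V' t" "\<lambda>t. - V'' t" M p
  proof
    show "((\<lambda>t. - V t) has_real_derivative - V' t) (at t)" if "0 < t" "t < 1" for t
      using dV[OF that] by (rule DERIV_minus)
    show "((\<lambda>t. - V' t) has_real_derivative - V'' t) (at t)" if "0 < t" "t < 1" for t
      using dV'[OF that] by (rule DERIV_minus)
    show "- V'' t + (M - 1) / t * - V' t + \<bar>- V t\<bar> powr (p - 1) * - V t = 0" if "0 < t" "t < 1" for t
      using ode[OF that] by simp
  qed (use p M2 M3 in auto)
  have "N.E t = E t" for t unfolding N.E_def E_def by simp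
  then show ?thesis using assms by (intro N.core) auto
qed

end

lemma sep_finite:
  fixes Z :: "real set"
  assumes l: "l > 0" and sub: "Z \<subseteq> {a..b}" and sep: "\<And>x y. x \<in> Z \<Longrightarrow> y \<in> Z \<Longrightarrow> x < y \<Longrightarrow> l \<le> y - x"
  shows "finite Z"
proof -
  define f where "f x = \<lfloor>(x - a) / l\<rfloor>" for x
  have inj: "inj_on f Z"
  proof (rule inj_onI)
    fix x y assume xy: "x \<in> Z" "y \<in> Z" "f x = f y"
    show "x = y"
    proof (rule ccontr)
      assume "x \<noteq> y"
      then consider "x < y" | "y < x" by linarith
      then show False
      proof cases
        case 1
        then have "l \<le> y - x" using sep xy by auto
        moreover have "(y - a) / l - (x - a) / l = (y - x) / l" by (simp add: diff_divide_distrib)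
        moreover have "1 \<le> (y - x) / l" using l \<open>l \<le> y - x\<close> by (simp add: le_divide_eq)
        ultimately have "(x - a) / l + 1 \<le> (y - a) / l" by linarith
        then have "f x + 1 \<le> f y" unfolding f_def by linarith
        then show False using xy by simp
      next
        case 2
        then have "l \<le> x - y" using sep xy by auto
        moreover have "(x - a) / l - (y - a) / l = (x - y) / l" by (simp add: diff_divide_distrib)
        moreover have "1 \<le> (x - y) / l" using l \<open>l \<le> x - y\<close> by (simp add: le_divide_eq)
        ultimately have "(y - a) / l + 1 \<le> (x - a) / l" by linarith
        then have "f y + 1 \<le> f x" unfolding f_def by linarith
        then show False using xy by simp
      qed
    qed
  qed
  have "f ` Z \<subseteq> {\<lfloor>(a - a) / l\<rfloor>..\<lfloor>(b - a) / l\<rfloor>}"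
  proof
    fix y assume "y \<in> f ` Z"
    then obtain x where x: "x \<in> Z" "y = f x" by auto
    then have "a \<le> x" "x \<le> b" using sub by auto
    then have "(a - a) / l \<le> (x - a) / l" "(x - a) / l \<le> (b - a) / l"
      using l by (intro divide_right_mono; simp)+
    then show "y \<in> {\<lfloor>(a - a) / l\<rfloor>..\<lfloor>(b - a) / l\<rfloor>}"
      unfolding x f_def atLeastAtMost_iff by (intro conjI floor_mono)
  qed
  then have "finite (f ` Z)" by (rule finite_subset) simp
  then show ?thesis using inj by (simp add: finite_image_iff)
qed

context osc begin

lemma window_zero:
  assumes "0 < a" "a \<le> b" "b < 1" "\<forall>t\<in>{a..b}. e \<le> E t" "0 < e"
    "0 < L" "L powr (p + 1) / (p + 1) \<le> e / 2"
    "2 * (L / sqrt e) + pi / sqrt (L powr (p - 1)) < b - a"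
  shows "\<exists>z\<in>{a..b}. V z = 0"
proof (rule ccontr)
  assume nz: "\<not> (\<exists>z\<in>{a..b}. V z = 0)"
  have cont: "continuous_on {a..t} V" if "t \<in> {a..b}" for t
    using that assms by (intro V_cont) auto
  show False
  proof (cases "V a > 0")
    case True
    have "\<forall>t\<in>{a..b}. 0 < V t"
    proof
      fix t assume t: "t \<in> {a..b}"
      show "0 < V t"
      proof (rule ccontr)
        assume "\<not> 0 < V t"
        then obtain x where "a \<le> x" "x \<le> t" "V x = 0"
          using IVT2'[of V t 0 a] True t cont[OF t] by force
        then show False using nz t by auto
      qed
    qed
    then show False using core[OF assms(1-3) _ assms(4-7)] assms(8) by linarith
  next
    case False
    then have Va: "V a < 0" using nz assms by (metis atLeastAtMost_iff linorder_neqE_linordered_idom order_refl)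
    have "\<forall>t\<in>{a..b}. V t < 0"
    proof
      fix t assume t: "t \<in> {a..b}"
      show "V t < 0"
      proof (rule ccontr)
        assume "\<not> V t < 0"
        then obtain x where "a \<le> x" "x \<le> t" "V x = 0"
          using IVT'[of V a 0 t] Va t cont[OF t] by force
        then show False using nz t by auto
      qed
    qed
    then show False using core_neg[OF assms(1-3) _ assms(4-7)] assms(8) by linarith
  qed
qed

lemma nonzero_exists:
  assumes "0 < a" "a < b" "b < 1" "\<forall>t\<in>{a..b}. 0 < E t"
  shows "\<exists>x\<in>{a<..<b}. V x \<noteq> 0"
proof (rule ccontr)
  assume "\<not> (\<exists>x\<in>{a<..<b}. V x \<noteq> 0)"
  then have z: "\<forall>x\<in>{a<..<b}. V x = 0" by auto
  define m where "m = (a + b) / 2"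
  have m: "a < m" "m < b" using assms unfolding m_def by auto
  have ev: "\<forall>\<^sub>F x in nhds m. V x = 0"
    using eventually_nhds_in_open[of "{a<..<b}" m] m z by (auto elim!: eventually_mono)
  have "(V has_real_derivative 0) (at m)"
    by (subst DERIV_cong_ev[OF refl ev refl]) (rule DERIV_const)
  moreover have "(V has_real_derivative V' m) (at m)" using m assms by (intro dV) auto
  ultimately have "V' m = 0" using DERIV_unique by blast
  moreover have "V m = 0" using z m by auto
  ultimately have "E m = 0" unfolding E_def using p by simp
  moreover have "m \<in> {a..b}" using m by auto
  ultimately show False using assms by force
qed

lemma gap:
  assumes "0 < z" "z < z'" "z' \<le> 1" "V z = 0" "V z' = 0" "continuous_on {z..z'} V"
    "\<forall>t\<in>{z..<z'}. e \<le> E t \<and> E t \<le> Eu" "0 < e"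
  shows "((p + 1) * e) powr (1 / (p + 1)) \<le> (z' - z) * sqrt (2 * Eu)"
proof -
  define m where "m = (z + z') / 2"
  have m: "z < m" "m < z'" "m < 1" using assms unfolding m_def by auto
  have "\<forall>t\<in>{z..m}. 0 < E t"
  proof
    fix t assume "t \<in> {z..m}"
    then have "t \<in> {z..<z'}" using m by auto
    then show "0 < E t" using assms by force
  qed
  then obtain x where x: "x \<in> {z<..<m}" "V x \<noteq> 0"
    using nonzero_exists[of z m] assms m by blast
  obtain c where c: "c \<in> {z..z'}" "\<forall>y\<in>{z..z'}. \<bar>V y\<bar> \<le> \<bar>V c\<bar>"
  proof -
    have "continuous_on {z..z'} (\<lambda>t. \<bar>V t\<bar>)" using assms(6) by (intro continuous_intros)
    then show ?thesis using continuous_attains_sup[of "{z..z'}" "\<lambda>t. \<bar>V t\<bar>"] assms that by auto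
  qed
  have "\<bar>V x\<bar> \<le> \<bar>V c\<bar>" using c x m by auto
  then have Vc: "V c \<noteq> 0" using x by auto
  then have cz: "z < c" "c < z'" using c assms by (auto simp: le_less)
  then have c01: "0 < c" "c < 1" using assms by auto
  have "V' c = 0"
  proof (cases "V c > 0")
    case True
    show ?thesis
    proof (rule DERIV_local_max[OF dV[OF c01], of "min (c - z) (z' - c)"])
      show "0 < min (c - z) (z' - c)" using cz by simp
      show "\<forall>y. \<bar>c - y\<bar> < min (c - z) (z' - c) \<longrightarrow> V y \<le> V c"
      proof (intro allI impI)
        fix y assume "\<bar>c - y\<bar> < min (c - z) (z' - c)"
        then have "y \<in> {z..z'}" by auto
        then have "\<bar>V y\<bar> \<le> \<bar>V c\<bar>" using c by auto
        then show "V y \<le> V c" using True by linarith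
      qed
    qed
  next
    case False
    then have Vn: "V c < 0" using Vc by linarith
    show ?thesis
    proof (rule DERIV_local_min[OF dV[OF c01], of "min (c - z) (z' - c)"])
      show "0 < min (c - z) (z' - c)" using cz by simp
      show "\<forall>y. \<bar>c - y\<bar> < min (c - z) (z' - c) \<longrightarrow> V c \<le> V y"
      proof (intro allI impI)
        fix y assume "\<bar>c - y\<bar> < min (c - z) (z' - c)"
        then have "y \<in> {z..z'}" by auto
        then have "\<bar>V y\<bar> \<le> \<bar>V c\<bar>" using c by auto
        then show "V c \<le> V y" using Vn by linarith
      qed
    qed
  qed
  then have Ec: "(p + 1) * E c = \<bar>V c\<bar> powr (p + 1)" unfolding E_def using p by simp
  have "(p + 1) * e \<le> (p + 1) * E c" using assms cz p by (intro mult_left_mono) auto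
  then have "(p + 1) * e \<le> \<bar>V c\<bar> powr (p + 1)" using Ec by simp
  then have "((p + 1) * e) powr (1 / (p + 1)) \<le> (\<bar>V c\<bar> powr (p + 1)) powr (1 / (p + 1))"
    using p assms by (intro powr_mono2) auto
  also have "\<dots> = \<bar>V c\<bar>" using p by (simp add: powr_powr)
  finally have A: "((p + 1) * e) powr (1 / (p + 1)) \<le> \<bar>V c\<bar>" .
  obtain \<xi> where xi: "z < \<xi>" "\<xi> < c" "V c - V z = (c - z) * V' \<xi>"
    using mvt[of z c] assms cz c01 by auto
  have "\<xi> \<in> {z..<z'}" using xi cz by auto
  then have Exi: "E \<xi> \<le> Eu" using assms by blast
  then have Eu0: "0 \<le> Eu" using E_nonneg[of \<xi>] by linarith
  have "(V' \<xi>)\<^sup>2 \<le> 2 * Eu" using Vprime_sq_le[of \<xi>] Exi by linarith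
  then have "\<bar>V' \<xi>\<bar> \<le> sqrt (2 * Eu)" using real_sqrt_le_mono by fastforce
  then have "\<bar>V c\<bar> \<le> (c - z) * sqrt (2 * Eu)" using xi assms cz by (simp add: abs_mult mult_left_mono)
  also have "\<dots> \<le> (z' - z) * sqrt (2 * Eu)" using cz Eu0 by (intro mult_right_mono) auto
  finally show ?thesis using A by linarith
qed

end

locale osc_sol = osc +
  assumes contV: "continuous_on {0..1} V" and V1: "V 1 = 0" and V0: "V 0 > 0"
    and init: "\<And>t. 0 \<le> t \<Longrightarrow> t < 1 \<Longrightarrow> V 0 powr (p - 1) * t\<^sup>2 \<le> M \<Longrightarrow> V 0 / 2 \<le> V t"
begin

definition s0 where "s0 = sqrt (M / V 0 powr (p - 1))"

lemma s0_pos: "s0 > 0" unfolding s0_def using V0 M2 by simp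

lemma s0_sq: "V 0 powr (p - 1) * s0\<^sup>2 = M"
  unfolding s0_def using V0 M2 by simp

lemma zeros_ge:
  assumes "0 < t" "t \<le> 1" "V t = 0"
  shows "t = 1 \<or> s0 \<le> t"
proof (rule ccontr)
  assume "\<not> (t = 1 \<or> s0 \<le> t)"
  then have t: "t < 1" "t < s0" using assms by auto
  have "t\<^sup>2 \<le> s0\<^sup>2" using t assms by (intro power_mono) auto
  then have "V 0 powr (p - 1) * t\<^sup>2 \<le> V 0 powr (p - 1) * s0\<^sup>2" by (intro mult_left_mono) auto
  then have "V 0 / 2 \<le> V t" using s0_sq t assms by (intro init) auto
  then show False using assms V0 by simp
qed

lemma V_s0:
  assumes "s0 < 1"
  shows "V 0 / 2 \<le> V s0"
  using s0_sq s0_pos assms by (intro init) auto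

lemma E_s0:
  assumes "s0 < 1"
  shows "(V 0 / 2) powr (p + 1) / (p + 1) \<le> E s0"
proof -
  have "(V 0 / 2) powr (p + 1) \<le> \<bar>V s0\<bar> powr (p + 1)"
    using V_s0[OF assms] V0 p by (intro powr_mono2) auto
  then have "(V 0 / 2) powr (p + 1) / (p + 1) \<le> \<bar>V s0\<bar> powr (p + 1) / (p + 1)"
    using p by (intro divide_right_mono) auto
  also have "\<dots> \<le> E s0" unfolding E_def by simp
  finally show ?thesis .
qed

lemma zeros_finite: "finite (zeros01 V)"
proof (cases "s0 < 1")
  case False
  have "zeros01 V \<subseteq> {1}"
    using zeros_ge False unfolding zeros01_def by force
  then show ?thesis by (rule finite_subset) simp
next
  case True
  define e0 where "e0 = s0 powr (2 * (M - 1)) * E s0"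
  have Es0: "E s0 > 0"
    using E_s0[OF True] V0 p by (smt (verit) divide_pos_pos powr_gt_zero)
  have e0: "e0 > 0" unfolding e0_def using Es0 s0_pos by simp
  define l where "l = ((p + 1) * e0) powr (1 / (p + 1)) / sqrt (2 * E s0)"
  have l: "l > 0" unfolding l_def using e0 p Es0 by simp
  have sub: "zeros01 V \<subseteq> {s0..1}"
    using zeros_ge True unfolding zeros01_def by fastforce
  have "finite (zeros01 V)"
  proof (rule sep_finite[OF l sub])
    fix x y assume xy: "x \<in> zeros01 V" "y \<in> zeros01 V" "x < y"
    then have x: "s0 \<le> x" "x \<le> 1" "V x = 0" "y \<le> 1" "V y = 0"
      using sub unfolding zeros01_def by auto
    have bnd: "\<forall>t\<in>{x..<y}. e0 \<le> E t \<and> E t \<le> E s0"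
    proof
      fix t assume "t \<in> {x..<y}"
      then have t: "s0 \<le> t" "t < 1" using x by auto
      show "e0 \<le> E t \<and> E t \<le> E s0"
        unfolding e0_def using E_lower[OF s0_pos t(1) t(2)] E_antimono[OF s0_pos t(1) t(2)] by simp
    qed
    have "((p + 1) * e0) powr (1 / (p + 1)) \<le> (y - x) * sqrt (2 * E s0)"
      using x xy s0_pos e0 bnd
      by (intro gap continuous_on_subset[OF contV]) auto
    then show "l \<le> y - x" unfolding l_def using Es0 by (simp add: divide_le_eq)
  qed
  then show ?thesis .
qed

end

definition estar :: "real \<Rightarrow> real \<Rightarrow> real \<Rightarrow> real" where
  "estar p Ms g = (g / 2) powr (p + 1) / (p + 1) * g powr (- (p - 1) * (Ms - 1))"
definition Lf :: "real \<Rightarrow> real \<Rightarrow> real \<Rightarrow> real" where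
  "Lf p Ms g = (estar p Ms g * (p + 1) / 2) powr (1 / (p + 1))"
definition Hf :: "real \<Rightarrow> real \<Rightarrow> real \<Rightarrow> real" where
  "Hf p Ms g = 2 * (Lf p Ms g / sqrt (estar p Ms g)) + pi / sqrt (Lf p Ms g powr (p - 1))"

context osc_sol begin

lemma many_zeros:
  fixes m :: nat
  assumes Ms: "M \<le> Ms" and g1: "1 \<le> V 0" and g12: "12 \<le> V 0 powr (p - 1)"
    and H: "Hf p Ms (V 0) < 1 / (2 * (2 * real m + 1))"
  shows "\<exists>x. x 0 = 0 \<and> (\<forall>i\<le>m. 0 \<le> x i \<and> x i < 1 \<and> V (x i) \<noteq> 0) \<and>
           (\<forall>i<m. \<exists>z. x i < z \<and> z < x (Suc i) \<and> V z = 0)"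
proof -
  define g where "g = V 0"
  have g0: "g > 0" using V0 g_def by simp
  have "s0\<^sup>2 = M / g powr (p - 1)" unfolding s0_def g_def using V0 M2 by simp
  also have "\<dots> \<le> 3 / 12" using M3 g12 M2 unfolding g_def by (intro frac_le) auto
  finally have "s0\<^sup>2 \<le> (1/2)\<^sup>2" by (simp add: power2_eq_square)
  then have s0h: "s0 \<le> 1 / 2" by (rule power2_le_imp_le) simp
  have s01: "s0 < 1" using s0h by simp
  define e where "e = estar p Ms g"
  have e0: "e > 0" unfolding e_def estar_def using g0 p by simp
  have Elow: "e \<le> E t" if t: "1 / 2 \<le> t" "t < 1" for t
  proof -
    have st: "s0 \<le> t" using s0h t by simp
    have "s0 powr (2 * (M - 1)) = (s0 powr 2) powr (M - 1)"
      by (simp only: powr_powr)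
    also have "s0 powr 2 = s0\<^sup>2" using s0_pos by simp
    also have "s0\<^sup>2 = M / g powr (p - 1)" unfolding s0_def g_def using V0 M2 by simp
    finally have A: "s0 powr (2 * (M - 1)) = (M / g powr (p - 1)) powr (M - 1)" .
    have "g powr (- (p - 1) * (Ms - 1)) \<le> g powr (- (p - 1) * (M - 1))"
      using g1 Ms p unfolding g_def by (intro powr_mono) (auto simp: mult_left_mono)
    also have "\<dots> = (1 / g powr (p - 1)) powr (M - 1)"
    proof -
      have "g powr (- (p - 1) * (M - 1)) = (g powr (- (p - 1))) powr (M - 1)"
        by (simp only: powr_powr)
      then show ?thesis by (simp only: powr_minus_divide)
    qed
    also have "\<dots> \<le> (M / g powr (p - 1)) powr (M - 1)"
      using M2 g0 by (intro powr_mono2 divide_right_mono) auto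
    finally have B: "g powr (- (p - 1) * (Ms - 1)) \<le> s0 powr (2 * (M - 1))" using A by simp
    have C: "(g / 2) powr (p + 1) / (p + 1) \<le> E s0" using E_s0[OF s01] g_def by simp
    have "e \<le> s0 powr (2 * (M - 1)) * E s0"
      unfolding e_def estar_def using B C g0 p
      by (subst mult.commute) (intro mult_mono; simp)
    also have "\<dots> \<le> E t" using E_lower[OF s0_pos st t(2)] .
    finally show ?thesis .
  qed
  define L where "L = Lf p Ms g"
  have L0: "L > 0" unfolding L_def Lf_def using e0 p unfolding e_def by simp
  have Lp: "L powr (p + 1) / (p + 1) \<le> e / 2"
  proof -
    have "L powr (p + 1) = e * (p + 1) / 2"
      unfolding L_def Lf_def e_def[symmetric] using e0 p by (simp add: powr_powr)
    then show ?thesis using p by simp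
  qed
  define h where "h = 1 / (2 * (2 * real m + 1))"
  have h0: "h > 0" unfolding h_def by simp
  have Hh: "2 * (L / sqrt e) + pi / sqrt (L powr (p - 1)) < h"
    using H unfolding h_def L_def e_def Hf_def g_def .
  define a where "a i = 1 / 2 + real i * h" for i :: nat
  have a_lt: "a i + h < 1" if "i < 2 * m" for i
  proof -
    have "real i + 1 \<le> 2 * real m" using that by linarith
    then have "(real i + 1) * h \<le> 2 * real m * h" using h0 by (intro mult_right_mono) auto
    moreover have "2 * real m * h < 1 / 2" unfolding h_def by (simp add: field_simps)
    ultimately show ?thesis unfolding a_def by (simp add: algebra_simps)
  qed
  have a_pos: "1 / 2 \<le> a i" for i unfolding a_def using h0 by simp
  have zero_in: "\<exists>z. a i \<le> z \<and> z \<le> a i + h \<and> V z = 0" if "i < 2 * m" for i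
  proof -
    have "\<exists>z\<in>{a i..a i + h}. V z = 0"
    proof (rule window_zero[OF _ _ _ _ e0 L0 Lp])
      show "\<forall>t\<in>{a i..a i + h}. e \<le> E t" using a_lt[OF that] a_pos[of i] by (auto intro!: Elow)
    qed (use a_pos[of i] a_lt[OF that] h0 Hh in auto)
    then show ?thesis by auto
  qed
  have nz_in: "\<exists>x. a i < x \<and> x < a i + h \<and> V x \<noteq> 0" if "i < 2 * m" for i
  proof -
    have "\<exists>x\<in>{a i<..<a i + h}. V x \<noteq> 0"
    proof (rule nonzero_exists)
      show "\<forall>t\<in>{a i..a i + h}. 0 < E t"
        using a_lt[OF that] a_pos[of i] e0 by (auto intro: less_le_trans[OF e0 Elow])
    qed (use a_pos[of i] a_lt[OF that] h0 in auto)
    then show ?thesis by auto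
  qed
  define zr where "zr j = (SOME z. a (2 * j) \<le> z \<and> z \<le> a (2 * j) + h \<and> V z = 0)" for j
  define nz where "nz j = (SOME x. a (2 * j + 1) < x \<and> x < a (2 * j + 1) + h \<and> V x \<noteq> 0)" for j
  have zr: "a (2 * j) \<le> zr j \<and> zr j \<le> a (2 * j) + h \<and> V (zr j) = 0" if "j < m" for j
  proof -
    have "2 * j < 2 * m" using that by simp
    from zero_in[OF this] show ?thesis unfolding zr_def by (rule someI_ex)
  qed
  have nz: "a (2 * j + 1) < nz j \<and> nz j < a (2 * j + 1) + h \<and> V (nz j) \<noteq> 0" if "j < m" for j
  proof -
    have "2 * j + 1 < 2 * m" using that by simp
    from nz_in[OF this] show ?thesis unfolding nz_def by (rule someI_ex)
  qed
  have aS: "a (Suc i) = a i + h" for i unfolding a_def by (simp add: algebra_simps)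
  define x where "x i = (if i = 0 then 0 else nz (i - 1))" for i
  have xprop: "0 \<le> x i \<and> x i < 1 \<and> V (x i) \<noteq> 0" if i: "i \<le> m" for i
  proof (cases "i = 0")
    case True
    then show ?thesis unfolding x_def using V0 by simp
  next
    case False
    then have j: "i - 1 < m" using i by simp
    have n: "a (2 * (i - 1) + 1) < nz (i - 1)" "nz (i - 1) < a (2 * (i - 1) + 1) + h" "V (nz (i - 1)) \<noteq> 0"
      using nz[OF j] by auto
    have "a (2 * (i - 1) + 1) + h < 1" using j by (intro a_lt) simp
    moreover have "1 / 2 \<le> a (2 * (i - 1) + 1)" by (rule a_pos)
    ultimately show ?thesis unfolding x_def using False n by simp
  qed
  have xzero: "\<exists>z. x i < z \<and> z < x (Suc i) \<and> V z = 0" if i: "i < m" for i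
  proof (intro exI[of _ "zr i"] conjI)
    have z: "a (2 * i) \<le> zr i" "zr i \<le> a (2 * i) + h" "V (zr i) = 0" using zr[OF i] by auto
    have n: "a (2 * i + 1) < nz i" using nz[OF i] by auto
    show "V (zr i) = 0" using z by simp
    have "a (2 * i + 1) = a (2 * i) + h" using aS[of "2 * i"] by simp
    then show "zr i < x (Suc i)" unfolding x_def using z n by simp
    show "x i < zr i"
    proof (cases "i = 0")
      case True
      then show ?thesis using z a_pos[of 0] unfolding x_def by simp
    next
      case False
      then have j: "i - 1 < m" using i by simp
      have n': "nz (i - 1) < a (2 * (i - 1) + 1) + h" using nz[OF j] by auto
      have "Suc (2 * (i - 1) + 1) = 2 * i" using False by simp
      then have "a (2 * i) = a (2 * (i - 1) + 1) + h" using aS by metis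
      then show ?thesis unfolding x_def using False n' z by simp
    qed
  qed
  show ?thesis
    by (intro exI[of _ x] conjI allI impI xprop xzero) (simp add: x_def)
qed

end

lemma comp_sep:
  fixes f :: "real \<Rightarrow> real"
  assumes C: "C \<in> components {r \<in> {0..<1}. f r \<noteq> 0}" and "x \<in> C" "x < z" "z < y" "f z = 0"
  shows "y \<notin> C"
proof
  assume "y \<in> C"
  have "{x..y} \<subseteq> C" using connected_contains_Icc[OF in_components_connected[OF C] \<open>x \<in> C\<close> \<open>y \<in> C\<close>] .
  then have "z \<in> C" using assms by auto
  then show False using in_components_subset[OF C] assms by auto
qed

lemma comp_ge:
  fixes f :: "real \<Rightarrow> real" and x :: "nat \<Rightarrow> real" and m :: nat
  defines "S \<equiv> {r \<in> {0..<1}. f r \<noteq> 0}"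
  assumes fin: "finite (components S)"
    and xS: "\<And>i. i \<le> m \<Longrightarrow> x i \<in> S"
    and zs: "\<And>i. i < m \<Longrightarrow> \<exists>z. x i < z \<and> z < x (Suc i) \<and> f z = 0"
  shows "m + 1 \<le> card (components S)"
proof -
  have step: "x i < x (Suc i)" if "i < m" for i using zs[OF that] by auto
  have mono: "x (Suc i) \<le> x j" if "i < j" "j \<le> m" for i j
    using that
  proof (induction j)
    case 0 then show ?case by simp
  next
    case (Suc j)
    show ?case
    proof (cases "i = j")
      case True then show ?thesis by simp
    next
      case False
      then have "x (Suc i) \<le> x j" using Suc by simp
      also have "x j < x (Suc j)" using Suc by (intro step) simp
      finally show ?thesis by simp
    qed
  qed
  define Cf where "Cf i = connected_component_set S (x i)" for i
  have Cf_in: "Cf i \<in> components S" if "i \<le> m" for i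
    unfolding Cf_def using xS[OF that] by (rule componentsI)
  have x_in: "x i \<in> Cf i" if "i \<le> m" for i
    unfolding Cf_def using xS[OF that] by (simp add: connected_component_refl)
  have inj: "inj_on Cf {0..m}"
  proof (rule inj_onI)
    fix i j assume ij: "i \<in> {0..m}" "j \<in> {0..m}" "Cf i = Cf j"
    show "i = j"
    proof (rule ccontr)
      assume "i \<noteq> j"
      then consider "i < j" | "j < i" by linarith
      then show False
      proof cases
        case 1
        obtain z where z: "x i < z" "z < x (Suc i)" "f z = 0" using zs[of i] 1 ij by auto
        have "z < x j" using z mono[of i j] 1 ij by auto
        have Ci: "Cf i \<in> components {r \<in> {0..<1}. f r \<noteq> 0}" using Cf_in[of i] ij unfolding S_def by auto
        have xi: "x i \<in> Cf i" using x_in[of i] ij by auto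
        have "x j \<notin> Cf i"
          using comp_sep[OF Ci xi z(1) \<open>z < x j\<close> z(3)] .
        then show False using ij x_in[of j] by auto
      next
        case 2
        obtain z where z: "x j < z" "z < x (Suc j)" "f z = 0" using zs[of j] 2 ij by auto
        have "z < x i" using z mono[of j i] 2 ij by auto
        have Ci: "Cf j \<in> components {r \<in> {0..<1}. f r \<noteq> 0}" using Cf_in[of j] ij unfolding S_def by auto
        have xi: "x j \<in> Cf j" using x_in[of j] ij by auto
        have "x i \<notin> Cf j"
          using comp_sep[OF Ci xi z(1) \<open>z < x i\<close> z(3)] .
        then show False using ij x_in[of i] by auto
      qed
    qed
  qed
  have "Cf ` {0..m} \<subseteq> components S" using Cf_in by auto
  then have "card (Cf ` {0..m}) \<le> card (components S)" using fin by (intro card_mono)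
  moreover have "card (Cf ` {0..m}) = m + 1" using inj by (simp add: card_image)
  ultimately show ?thesis by simp
qed

lemma comp_sup:
  fixes f :: "real \<Rightarrow> real"
  defines "S \<equiv> {r \<in> {0..<1}. f r \<noteq> 0}"
  assumes cont: "continuous_on {0..1} f" and f1: "f 1 = 0" and C: "C \<in> components S"
  shows "Sup C \<in> zeros01 f"
proof -
  have Cne: "C \<noteq> {}" using C by (rule in_components_nonempty)
  have CS: "C \<subseteq> S" using C by (rule in_components_subset)
  have Cconn: "connected C" using C by (rule in_components_connected)
  have bdd: "bdd_above C" using CS unfolding S_def by (intro bdd_aboveI[of _ 1]) auto
  define s where "s = Sup C"
  obtain x where x: "x \<in> C" using Cne by auto
  have Ceq: "C = connected_component_set S x"
    using C x by (metis components_iff connected_component_eq)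
  have xs: "x \<le> s" unfolding s_def using x bdd by (rule cSup_upper)
  have s1: "s \<le> 1" unfolding s_def using Cne CS unfolding S_def by (intro cSup_least) auto
  have s0: "0 \<le> s" using xs x CS unfolding S_def by auto
  have below: "{x..<s} \<subseteq> C"
  proof
    fix y assume y: "y \<in> {x..<s}"
    then obtain c where c: "c \<in> C" "y < c" unfolding s_def using less_cSup_iff[OF Cne bdd] by auto
    then show "y \<in> C" using connected_contains_Icc[OF Cconn x c(1)] y by auto
  qed
  have fs: "f s = 0"
  proof (rule ccontr)
    assume fs: "f s \<noteq> 0"
    then have "s \<noteq> 1" using f1 by auto
    then have s1': "s < 1" using s1 by simp
    have "isCont f s \<or> True" by simp
    have "continuous (at s within {0..1}) f" using cont s0 s1 by (simp add: continuous_on_eq_continuous_within)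
    then have "\<forall>\<^sub>F y in at s within {0..1}. f y \<noteq> 0"
      using fs unfolding continuous_within by (rule tendsto_imp_eventually_ne)
    then obtain d where d: "d > 0" "\<And>y. y \<in> {0..1} \<Longrightarrow> y \<noteq> s \<Longrightarrow> dist y s < d \<Longrightarrow> f y \<noteq> 0"
      unfolding eventually_at by auto
    define t where "t = min (s + d / 2) ((s + 1) / 2)"
    have t'1: "t \<le> (s + 1) / 2" unfolding t_def by (rule min.cobounded2)
    have t'2: "t \<le> s + d / 2" unfolding t_def by (rule min.cobounded1)
    have t'3: "s < t" unfolding t_def using d s1' by simp
    note t' = t'1 t'2 t'3
    have t2: "t < 1" using t'1 s1' by argo
    have t3: "t - s < d" using t'2 d by argo
    note t = t'3 t2 t3
    have "{x..t} \<subseteq> S"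
    proof
      fix y assume y: "y \<in> {x..t}"
      show "y \<in> S"
      proof (cases "y < s")
        case True then show ?thesis using below y CS by auto
      next
        case False
        then have "f y \<noteq> 0" using fs d(2)[of y] y t s0 by (cases "y = s") (auto simp: dist_real_def)
        then show ?thesis using y t s0 False unfolding S_def by auto
      qed
    qed
    then have "{x..t} \<subseteq> C" unfolding Ceq using x xs t
      by (intro connected_component_maximal) auto
    then have "t \<le> s" unfolding s_def using bdd xs t by (intro cSup_upper) auto
    then show False using t by simp
  qed
  have "s \<noteq> 0"
  proof
    assume "s = 0"
    then have "x = 0" using xs x CS unfolding S_def by auto
    then have "f s \<noteq> 0" using x CS \<open>s = 0\<close> unfolding S_def by auto
    then show False using fs by simp
  qed
  then show ?thesis using fs s0 s1 unfolding zeros01_def s_def by auto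
qed

lemma comp_le:
  fixes f :: "real \<Rightarrow> real"
  defines "S \<equiv> {r \<in> {0..<1}. f r \<noteq> 0}"
  assumes cont: "continuous_on {0..1} f" and f1: "f 1 = 0" and fin: "finite (zeros01 f)"
  shows "finite (components S) \<and> card (components S) \<le> card (zeros01 f)"
proof -
  have inj: "inj_on Sup (components S)"
  proof (rule inj_onI)
    fix C1 C2 assume C: "C1 \<in> components S" "C2 \<in> components S" "Sup C1 = Sup C2"
    define s where "s = Sup C1"
    have sz: "s \<in> zeros01 f" unfolding s_def S_def using comp_sup[OF cont f1 C(1)[unfolded S_def]] .
    then have s: "0 < s" "s \<le> 1" "f s = 0" unfolding zeros01_def by auto
    define Zb where "Zb = insert 0 {z \<in> zeros01 f. z < s}"
    have Zfin: "finite Zb" unfolding Zb_def using fin by auto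
    define b where "b = Max Zb"
    have bZ: "b \<in> Zb" unfolding b_def using Zfin by (intro Max_in) (auto simp: Zb_def)
    have bs: "b < s" using bZ s unfolding Zb_def by auto
    have b0: "0 \<le> b" unfolding b_def using Zfin by (intro Max_ge) (auto simp: Zb_def)
    have nz: "y \<in> S" if "b < y" "y < s" for y
    proof -
      have "f y \<noteq> 0"
      proof
        assume "f y = 0"
        then have "y \<in> Zb" using that b0 s unfolding Zb_def zeros01_def by auto
        then have "y \<le> b" unfolding b_def by (rule Max_ge[OF Zfin])
        then show False using that by simp
      qed
      then show ?thesis using that b0 s unfolding S_def by auto
    qed
    have pick: "\<exists>c\<in>Ci. b < c \<and> c < s" if Ci: "Ci \<in> components S" "Sup Ci = s" for Ci
    proof -
      have ne: "Ci \<noteq> {}" using Ci by (simp add: in_components_nonempty)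
      have bdd: "bdd_above Ci" using in_components_subset[OF Ci(1)] unfolding S_def by (intro bdd_aboveI[of _ 1]) auto
      obtain c where c: "c \<in> Ci" "b < c" using less_cSup_iff[OF ne bdd] bs Ci by auto
      have "c \<le> s" using c bdd Ci by (metis cSup_upper)
      moreover have "c \<noteq> s" using c in_components_subset[OF Ci(1)] s unfolding S_def by auto
      ultimately show ?thesis using c by auto
    qed
    obtain c1 where c1: "c1 \<in> C1" "b < c1" "c1 < s" using pick[OF C(1)] s_def by auto
    obtain c2 where c2: "c2 \<in> C2" "b < c2" "c2 < s" using pick[OF C(2)] C(3) s_def by auto
    have sub: "{min c1 c2..max c1 c2} \<subseteq> S" using c1 c2 by (intro subsetI nz) auto
    have "{min c1 c2..max c1 c2} \<subseteq> connected_component_set S c1"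
      using sub by (intro connected_component_maximal) auto
    moreover have "connected_component_set S c1 = C1"
      using C(1) c1(1) by (metis components_iff connected_component_eq)
    moreover have "c2 \<in> {min c1 c2..max c1 c2}" by auto
    ultimately have "c2 \<in> C1" by blast
    then have "C1 \<inter> C2 \<noteq> {}" using c2 by auto
    then show "C1 = C2" using components_eq[OF C(1) C(2)] by simp
  qed
  have img: "Sup ` components S \<subseteq> zeros01 f"
    using comp_sup[OF cont f1] unfolding S_def by auto
  then have "finite (Sup ` components S)" using fin by (rule finite_subset)
  then have f: "finite (components S)" using inj by (rule finite_imageD)
  have "card (components S) = card (Sup ` components S)" using inj by (simp add: card_image)
  also have "\<dots> \<le> card (zeros01 f)" using img fin by (rule card_mono[rotated])
  finally show ?thesis using f by simp
qed


lemma powr_at_top_pos: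
  assumes "b > 0"
  shows "filterlim (\<lambda>x::real. x powr b) at_top at_top"
proof -
  have "filterlim (\<lambda>x::real. exp (b * ln x)) at_top at_top"
    by (intro filterlim_compose[OF exp_at_top] filterlim_tendsto_pos_mult_at_top[OF tendsto_const assms ln_at_top])
  moreover have "\<forall>\<^sub>F x in at_top. exp (b * ln x) = (x::real) powr b"
    using eventually_gt_at_top[of 0] by eventually_elim (simp add: powr_def)
  ultimately show ?thesis using filterlim_cong[OF refl refl, of "\<lambda>x. exp (b * ln x)" "\<lambda>x. x powr b" at_top at_top] by simp
qed

lemma filterlim_transf:
  assumes "filterlim f F G" "eventually (\<lambda>x. f x = g x) G"
  shows "filterlim g F G"
  using filterlim_cong[OF refl refl assms(2)] assms(1) by simp

lemma ring_aux: "(a::real) * b / c * d = (b / c) * (a * d)"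
  by (simp add: divide_inverse ac_simps)

lemma estar_eq:
  assumes "g > 0"
  shows "estar p Ms g = (2 powr (- (p + 1)) / (p + 1)) * g powr (p + 1 - (p - 1) * (Ms - 1))"
proof -
  have m: "2 powr (- (p + 1)) = 1 / 2 powr (p + 1)" by (rule powr_minus_divide)
  have "(g / 2) powr (p + 1) = g powr (p + 1) / 2 powr (p + 1)"
    using assms by (simp add: powr_divide)
  then have "(g / 2) powr (p + 1) = g powr (p + 1) * 2 powr (- (p + 1))"
    unfolding m by simp
  moreover have "g powr (p + 1) * g powr (- (p - 1) * (Ms - 1)) = g powr (p + 1 - (p - 1) * (Ms - 1))"
  proof -
    have "p + 1 - (p - 1) * (Ms - 1) = (p + 1) + (- (p - 1) * (Ms - 1))" by (simp add: algebra_simps)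
    then show ?thesis by (simp only: powr_add)
  qed
  ultimately show ?thesis unfolding estar_def ring_aux by simp
qed

lemma estar_lim:
  assumes p: "p > 1" and b: "p + 1 - (p - 1) * (Ms - 1) > 0"
  shows "filterlim (estar p Ms) at_top at_top"
proof -
  have "filterlim (\<lambda>g. (2 powr (- (p + 1)) / (p + 1)) * g powr (p + 1 - (p - 1) * (Ms - 1))) at_top at_top"
    using p by (intro filterlim_tendsto_pos_mult_at_top[OF tendsto_const _ powr_at_top_pos[OF b]]) simp
  moreover have "\<forall>\<^sub>F g in at_top. (2 powr (- (p + 1)) / (p + 1)) * g powr (p + 1 - (p - 1) * (Ms - 1)) = estar p Ms g"
    using eventually_gt_at_top[of 0] by eventually_elim (simp add: estar_eq)
  ultimately show ?thesis by (rule filterlim_transf)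
qed

lemma Hf_lim:
  assumes p: "p > 1" and b: "p + 1 - (p - 1) * (Ms - 1) > 0"
  shows "(Hf p Ms \<longlongrightarrow> 0) at_top"
proof -
  have E: "filterlim (estar p Ms) at_top at_top" using estar_lim[OF p b] .
  have Epos: "\<forall>\<^sub>F g in at_top. estar p Ms g > 0"
    using E unfolding filterlim_at_top_dense by blast
  define C where "C = ((p + 1) / 2) powr (1 / (p + 1))"
  have C0: "C > 0" unfolding C_def using p by simp
  have Lf_eq: "\<forall>\<^sub>F g in at_top. Lf p Ms g = C * estar p Ms g powr (1 / (p + 1))"
    using Epos by eventually_elim (use p in \<open>simp add: Lf_def C_def powr_mult[symmetric] mult.commute\<close>)
  have L: "filterlim (Lf p Ms) at_top at_top"
  proof -
    have "filterlim (\<lambda>g. C * estar p Ms g powr (1 / (p + 1))) at_top at_top"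
      using p by (intro filterlim_tendsto_pos_mult_at_top[OF tendsto_const C0]
          filterlim_compose[OF powr_at_top_pos E]) simp
    then show ?thesis by (rule filterlim_transf) (use Lf_eq in \<open>auto elim: eventually_mono\<close>)
  qed
  have t1: "((\<lambda>g. Lf p Ms g / sqrt (estar p Ms g)) \<longlongrightarrow> 0) at_top"
  proof -
    have "((\<lambda>g. C * estar p Ms g powr (1 / (p + 1) - 1 / 2)) \<longlongrightarrow> C * 0) at_top"
      using p by (intro tendsto_mult tendsto_const tendsto_neg_powr E) (simp add: field_simps)
    moreover have "\<forall>\<^sub>F g in at_top. C * estar p Ms g powr (1 / (p + 1) - 1 / 2) = Lf p Ms g / sqrt (estar p Ms g)"
      using Epos Lf_eq
    proof eventually_elim
      case (elim g)
      then show ?case by (simp add: powr_diff powr_half_sqrt[symmetric] less_imp_le)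
    qed
    ultimately show ?thesis by (simp add: tendsto_cong)
  qed
  have Lpos: "\<forall>\<^sub>F g in at_top. 0 < Lf p Ms g" using L unfolding filterlim_at_top_dense by blast
  have t2: "((\<lambda>g. pi / sqrt (Lf p Ms g powr (p - 1))) \<longlongrightarrow> 0) at_top"
  proof -
    have "((\<lambda>g. pi * Lf p Ms g powr (- ((p - 1) / 2))) \<longlongrightarrow> pi * 0) at_top"
      using p by (intro tendsto_mult tendsto_const tendsto_neg_powr L) simp
    moreover have "\<forall>\<^sub>F g in at_top. pi * Lf p Ms g powr (- ((p - 1) / 2)) = pi / sqrt (Lf p Ms g powr (p - 1))"
      using Lpos
      by eventually_elim (simp add: powr_minus_divide powr_half_sqrt_powr[symmetric] less_imp_le)
    ultimately show ?thesis by (simp add: tendsto_cong)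
  qed
  have "((\<lambda>g. 2 * (Lf p Ms g / sqrt (estar p Ms g)) + pi / sqrt (Lf p Ms g powr (p - 1))) \<longlongrightarrow> 2 * 0 + 0) at_top"
    by (intro tendsto_add tendsto_mult tendsto_const t1 t2)
  then show ?thesis unfolding Hf_def[abs_def] by simp
qed


lemma alg_ode:
  fixes t r Q m1 n1 A P c \<iota> :: real
  assumes "t \<noteq> 0" "r \<noteq> 0" "Q = t\<^sup>2 / r\<^sup>2" "m1 = \<iota> * n1 - \<iota> + 1"
  shows "c * ((- (n1 / r * A) - Q * P) * (\<iota> * (r / t)) * (\<iota> * (r / t)) + A * (\<iota> * ((\<iota> - 1) * (r / t\<^sup>2))))
     + m1 / t * (c * A * (\<iota> * (r / t))) + \<iota>\<^sup>2 * c * P = 0"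
  unfolding assms(3,4) using assms(1,2) by (simp add: field_simps power2_eq_square)

lemma transform:
  fixes N :: nat and p \<alpha> :: real and U U' U'' :: "real \<Rightarrow> real"
  assumes N: "N \<ge> 3" and p: "p > 1" and \<alpha>: "\<alpha> > 0" and M3: "2 * (real N + \<alpha>) / (\<alpha> + 2) \<le> 3"
    and dU: "\<forall>r\<in>{0..<1}. (U has_real_derivative U' r) (at r within {0..<1})"
    and dU': "\<forall>r\<in>{0<..<1}. (U' has_real_derivative U'' r) (at r)"
    and ode: "\<forall>r\<in>{0<..<1}. U'' r + (real N - 1) / r * U' r + r powr \<alpha> * \<bar>U r\<bar> powr (p - 1) * U r = 0"
  defines "\<iota> \<equiv> 2 / (\<alpha> + 2)"
  defines "c \<equiv> \<iota> powr (2 / (p - 1))"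
  shows "osc (\<lambda>t. c * U (t powr \<iota>)) (\<lambda>t. c * U' (t powr \<iota>) * (\<iota> * t powr (\<iota> - 1)))
     (\<lambda>t. c * (U'' (t powr \<iota>) * (\<iota> * t powr (\<iota> - 1)) * (\<iota> * t powr (\<iota> - 1))
        + U' (t powr \<iota>) * (\<iota> * ((\<iota> - 1) * t powr (\<iota> - 1 - 1)))))
     (2 * (real N + \<alpha>) / (\<alpha> + 2)) p"
proof
  have i0: "\<iota> > 0" "\<iota> < 1" unfolding \<iota>_def using \<alpha> by auto
  have c0: "c > 0" unfolding c_def using i0 by simp
  have r01: "t powr \<iota> \<in> {0<..<1}" if t: "0 < t" "t < 1" for t
    using t i0 powr_less_mono2[of \<iota> t 1] by auto
  have dUat: "(U has_real_derivative U' r) (at r)" if "r \<in> {0<..<1}" for r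
  proof -
    have "r \<in> interior {0..<1::real}" using that by simp
    then have "at r within {0..<1} = at r" by (rule at_within_interior)
    moreover have "(U has_real_derivative U' r) (at r within {0..<1})" using dU that by auto
    ultimately show ?thesis by simp
  qed
  show "2 < 2 * (real N + \<alpha>) / (\<alpha> + 2)" using N \<alpha> by (simp add: field_simps)
  show "2 * (real N + \<alpha>) / (\<alpha> + 2) \<le> 3" by (rule M3)
  show "1 < p" by (rule p)
  fix t :: real assume t: "0 < t" "t < 1"
  define r where "r = t powr \<iota>"
  have r: "0 < r" "r < 1" using r01[OF t] unfolding r_def by auto
  have dpow: "((\<lambda>t. t powr \<iota>) has_real_derivative \<iota> * t powr (\<iota> - 1)) (at t)"
    by (rule has_real_derivative_powr[OF t(1)])
  show "((\<lambda>t. c * U (t powr \<iota>)) has_real_derivative c * U' (t powr \<iota>) * (\<iota> * t powr (\<iota> - 1))) (at t)"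
    using DERIV_cmult[OF DERIV_chain2[OF dUat[OF r01[OF t]] dpow], of c] by (simp add: mult.assoc)
  have dpow2: "((\<lambda>t. \<iota> * t powr (\<iota> - 1)) has_real_derivative \<iota> * ((\<iota> - 1) * t powr (\<iota> - 1 - 1))) (at t)"
    by (intro DERIV_cmult has_real_derivative_powr[OF t(1)])
  have dU'c: "((\<lambda>t. U' (t powr \<iota>)) has_real_derivative U'' (t powr \<iota>) * (\<iota> * t powr (\<iota> - 1))) (at t)"
    using DERIV_chain2[OF dU'[rule_format, OF r01[OF t]] dpow] .
  show "((\<lambda>t. c * U' (t powr \<iota>) * (\<iota> * t powr (\<iota> - 1))) has_real_derivative
      c * (U'' (t powr \<iota>) * (\<iota> * t powr (\<iota> - 1)) * (\<iota> * t powr (\<iota> - 1))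
        + U' (t powr \<iota>) * (\<iota> * ((\<iota> - 1) * t powr (\<iota> - 1 - 1))))) (at t)"
    using DERIV_cmult[OF DERIV_mult[OF dU'c dpow2], of c] by (simp add: ac_simps)
  have T1: "t powr (\<iota> - 1) = r / t" unfolding r_def using t by (simp add: powr_diff)
  have T2: "t powr (\<iota> - 1 - 1) = r / t\<^sup>2"
  proof -
    have "t powr (\<iota> - 1 - 1) = t powr (\<iota> - 2)" by simp
    also have "\<dots> = r / t powr 2" unfolding r_def using t by (simp add: powr_diff)
    finally show ?thesis using t by simp
  qed
  have Q: "r powr \<alpha> = t\<^sup>2 / r\<^sup>2"
  proof -
    have "r powr \<alpha> * r powr 2 = r powr (\<alpha> + 2)" by (simp add: powr_add)
    also have "\<dots> = t powr (\<iota> * (\<alpha> + 2))" unfolding r_def by (simp add: powr_powr)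
    also have "\<iota> * (\<alpha> + 2) = 2" unfolding \<iota>_def using \<alpha> by (simp add: field_simps)
    finally have "r powr \<alpha> * r\<^sup>2 = t\<^sup>2" using r t by simp
    then show ?thesis using r by (simp add: field_simps)
  qed
  have cp: "c powr (p - 1) = \<iota>\<^sup>2"
  proof -
    have "2 / (p - 1) * (p - 1) = 2" using p by (simp add: field_simps)
    then have "c powr (p - 1) = \<iota> powr 2" unfolding c_def by (simp only: powr_powr)
    then show ?thesis using i0 by simp
  qed
  have P: "\<bar>c * U r\<bar> powr (p - 1) * (c * U r) = \<iota>\<^sup>2 * c * (\<bar>U r\<bar> powr (p - 1) * U r)"
    using c0 cp by (simp add: abs_mult powr_mult)
  have B: "U'' r = - ((real N - 1) / r * U' r) - r powr \<alpha> * (\<bar>U r\<bar> powr (p - 1) * U r)"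
    using ode r by (auto simp: algebra_simps eq_neg_iff_add_eq_0)
  have ia: "\<iota> * (\<alpha> + 2) = 2" unfolding \<iota>_def using \<alpha> by (simp add: field_simps)
  have Mi: "2 * (real N + \<alpha>) / (\<alpha> + 2) = \<iota> * (real N + \<alpha>)" unfolding \<iota>_def by simp
  have m1: "2 * (real N + \<alpha>) / (\<alpha> + 2) - 1 = \<iota> * (real N - 1) - \<iota> + 1"
    unfolding Mi using ia by (simp add: algebra_simps)
  show "c * (U'' (t powr \<iota>) * (\<iota> * t powr (\<iota> - 1)) * (\<iota> * t powr (\<iota> - 1))
        + U' (t powr \<iota>) * (\<iota> * ((\<iota> - 1) * t powr (\<iota> - 1 - 1))))
      + (2 * (real N + \<alpha>) / (\<alpha> + 2) - 1) / t * (c * U' (t powr \<iota>) * (\<iota> * t powr (\<iota> - 1)))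
      + \<bar>c * U (t powr \<iota>)\<bar> powr (p - 1) * (c * U (t powr \<iota>)) = 0"
    unfolding r_def[symmetric] T1 T2 P B
    by (rule alg_ode[OF _ _ Q m1]) (use t r in auto)
qed


locale usol =
  fixes N :: nat and p \<alpha> :: real and U U' U'' :: "real \<Rightarrow> real"
  assumes N: "N \<ge> 3" and p: "p > 1" and \<alpha>: "\<alpha> > 0"
    and cont: "continuous_on {0..1} U"
    and dU: "\<forall>r\<in>{0..<1}. (U has_real_derivative U' r) (at r within {0..<1})"
    and U'0: "U' 0 = 0"
    and dU': "\<forall>r\<in>{0<..<1}. (U' has_real_derivative U'' r) (at r)"
    and ode: "\<forall>r\<in>{0<..<1}. U'' r + (real N - 1) / r * U' r + r powr \<alpha> * \<bar>U r\<bar> powr (p - 1) * U r = 0"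
begin

lemma dUat:
  assumes "0 < r" "r < 1"
  shows "(U has_real_derivative U' r) (at r)"
proof -
  have "r \<in> interior {0..<1::real}" using assms by simp
  then have "at r within {0..<1} = at r" by (rule at_within_interior)
  moreover have "(U has_real_derivative U' r) (at r within {0..<1})" using dU assms by auto
  ultimately show ?thesis by simp
qed

lemma mvt0:
  assumes "0 < y" "y < 1"
  shows "\<exists>\<xi>. 0 < \<xi> \<and> \<xi> < y \<and> U y - U 0 = y * U' \<xi>"
proof -
  have "\<exists>l z. 0 < z \<and> z < y \<and> (U has_real_derivative l) (at z) \<and> U y - U 0 = (y - 0) * l"
  proof (rule MVT[OF assms(1)])
    show "continuous_on {0..y} U" using assms by (intro continuous_on_subset[OF cont]) auto
    fix x assume "0 < x" "x < y"
    then show "U differentiable (at x)" using dUat assms real_differentiable_def by force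
  qed
  then obtain l z where lz: "0 < z" "z < y" "(U has_real_derivative l) (at z)" "U y - U 0 = y * l" by auto
  have "l = U' z" using DERIV_unique[OF lz(3) dUat] lz assms by auto
  then show ?thesis using lz by auto
qed

lemma deriv0:
  assumes s1: "0 < s1" "s1 < 1" and eta: "\<eta> > 0"
  shows "\<not> (\<forall>s\<in>{0<..s1}. U' s \<le> - \<eta>)" and "\<not> (\<forall>s\<in>{0<..s1}. \<eta> \<le> U' s)"
proof -
  have "(U has_real_derivative U' 0) (at 0 within {0..<1})" using dU by auto
  then have "(U has_real_derivative 0) (at 0 within {0..<1})" using U'0 by simp
  then have "((\<lambda>y. (U y - U 0) / (y - 0)) \<longlongrightarrow> 0) (at 0 within {0..<1})"
    by (simp add: has_field_derivative_iff)
  then have "\<forall>\<^sub>F y in at 0 within {0..<1}. dist ((U y - U 0) / (y - 0)) 0 < \<eta>"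
    using eta by (rule tendstoD)
  then obtain d where d: "d > 0" "\<And>y. y \<in> {0..<1} \<Longrightarrow> y \<noteq> 0 \<Longrightarrow> dist y 0 < d \<Longrightarrow> \<bar>(U y - U 0) / y\<bar> < \<eta>"
    unfolding eventually_at by (auto simp: dist_real_def)
  define y where "y = min s1 (d / 2)"
  have y: "0 < y" "y \<le> s1" "y < d" unfolding y_def using d s1 by auto
  have y1: "y < 1" using y s1 by simp
  have q: "\<bar>(U y - U 0) / y\<bar> < \<eta>" using d(2)[of y] y y1 by (auto simp: dist_real_def)
  obtain \<xi> where xi: "0 < \<xi>" "\<xi> < y" "U y - U 0 = y * U' \<xi>" using mvt0[OF y(1) y1] by auto
  have qq: "(U y - U 0) / y = U' \<xi>" using xi y by simp
  have xin: "\<xi> \<in> {0<..s1}" using xi y by auto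
  show "\<not> (\<forall>s\<in>{0<..s1}. U' s \<le> - \<eta>)"
  proof
    assume "\<forall>s\<in>{0<..s1}. U' s \<le> - \<eta>"
    then have "U' \<xi> \<le> - \<eta>" using xin by auto
    then show False using q qq by auto
  qed
  show "\<not> (\<forall>s\<in>{0<..s1}. \<eta> \<le> U' s)"
  proof
    assume "\<forall>s\<in>{0<..s1}. \<eta> \<le> U' s"
    then have "\<eta> \<le> U' \<xi>" using xin by auto
    then show False using q qq by auto
  qed
qed

definition h where "h s = s powr (real N - 1) * U' s"

lemma h_deriv:
  assumes "0 < s" "s < 1"
  shows "(h has_real_derivative - (s powr (real N - 1) * s powr \<alpha> * (\<bar>U s\<bar> powr (p - 1) * U s))) (at s)"
proof -
  have D: "(h has_real_derivative (real N - 1) * s powr (real N - 1 - 1) * U' s + s powr (real N - 1) * U'' s) (at s)"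
    unfolding h_def[abs_def]
    using DERIV_mult[OF has_real_derivative_powr[OF assms(1), of "real N - 1"] dU'[rule_format, of s]] assms
    by (simp add: ac_simps)
  have "(real N - 1) * s powr (real N - 1 - 1) * U' s + s powr (real N - 1) * U'' s
      = s powr (real N - 1) * (U'' s + (real N - 1) / s * U' s)"
    using assms by (simp add: powr_diff field_simps power2_eq_square)
  also have "U'' s + (real N - 1) / s * U' s = - (s powr \<alpha> * (\<bar>U s\<bar> powr (p - 1) * U s))"
    using ode assms by (auto simp: algebra_simps eq_neg_iff_add_eq_0)
  finally show ?thesis using D by (simp add: ac_simps)
qed

lemma h_cont: "0 < a \<Longrightarrow> b < 1 \<Longrightarrow> continuous_on {a..b} h"
  by (intro continuous_at_imp_continuous_on ballI DERIV_isCont[OF h_deriv]) auto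

lemma powN_le1:
  assumes "0 < s" "s \<le> 1"
  shows "0 < s powr (real N - 1)" "s powr (real N - 1) \<le> 1"
  using assms N by (auto intro: powr_le1)

lemma est:
  assumes T: "0 < T" "T < 1" and pos: "\<forall>s\<in>{0..<T}. U s > 0" and g: "U 0 = \<gamma>"
  shows "\<gamma> - \<gamma> powr p * T powr (\<alpha> + 2) / ((real N + \<alpha>) * (\<alpha> + 2)) \<le> U T"
proof -
  have hdec: "h s1 \<le> h s" if "0 < s" "s \<le> s1" "s1 < T" for s s1
  proof (rule DERIV_nonpos_imp_decreasing_open[OF that(2)])
    fix x assume x: "s < x" "x < s1"
    then have "U x > 0" using pos that by auto
    then show "\<exists>y. (h has_real_derivative y) (at x) \<and> y \<le> 0"
      using h_deriv[of x] x that T by (intro exI[of _ _]) (auto intro!: mult_nonneg_nonneg simp: powr_ge_zero)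
  qed (use that T in \<open>intro h_cont; auto\<close>)
  have hle: "h s \<le> 0" if s: "0 < s" "s < T" for s
  proof (rule ccontr)
    assume "\<not> h s \<le> 0"
    then have hs: "h s > 0" by simp
    have "\<forall>x\<in>{0<..s}. h s \<le> U' x"
    proof
      fix x assume x: "x \<in> {0<..s}"
      have "h s \<le> h x" using hdec[of x s] x s by auto
      also have "\<dots> = x powr (real N - 1) * U' x" unfolding h_def by simp
      finally have A: "h s \<le> x powr (real N - 1) * U' x" .
      have x1: "0 < x powr (real N - 1)" "x powr (real N - 1) \<le> 1" using powN_le1[of x] x s T by auto
      then have "U' x \<ge> 0" using A hs by (smt (verit) zero_less_mult_iff)
      then have "x powr (real N - 1) * U' x \<le> U' x" using x1 by (simp add: mult_left_le_one_le)
      then show "h s \<le> U' x" using A by linarith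
    qed
    then show False using deriv0(2)[of s "h s"] s T hs by auto
  qed
  have U'le: "U' s \<le> 0" if "0 < s" "s < T" for s
  proof -
    have "s powr (real N - 1) * U' s \<le> 0" using hle[OF that] unfolding h_def .
    then show ?thesis using powN_le1[of s] that T by (simp add: mult_le_0_iff)
  qed
  have Ule: "U s \<le> \<gamma>" if "0 \<le> s" "s \<le> T" for s
  proof -
    have "U s \<le> U 0"
    proof (rule DERIV_nonpos_imp_decreasing_open[OF that(1)])
      fix x assume "0 < x" "x < s"
      then show "\<exists>y. (U has_real_derivative y) (at x) \<and> y \<le> 0"
        using dUat[of x] U'le[of x] that T by auto
    qed (use that T in \<open>intro continuous_on_subset[OF cont]; auto\<close>)
    then show ?thesis using g by simp
  qed
  define K where "K = real N + \<alpha>"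
  have K0: "K > 0" unfolding K_def using \<alpha> by simp
  define \<psi> where "\<psi> s = h s + \<gamma> powr p * s powr K / K" for s
  have psi_deriv: "(\<psi> has_real_derivative s powr (K - 1) * (\<gamma> powr p - U s powr p)) (at s)"
    if s: "0 < s" "s < T" for s
  proof -
    have Us: "U s > 0" using pos s by auto
    have D: "(\<psi> has_real_derivative - (s powr (real N - 1) * s powr \<alpha> * (\<bar>U s\<bar> powr (p - 1) * U s))
        + \<gamma> powr p * (K * s powr (K - 1)) / K) (at s)"
      unfolding \<psi>_def[abs_def]
      by (intro DERIV_add h_deriv DERIV_cdivide DERIV_cmult has_real_derivative_powr) (use s T in auto)
    have e1: "s powr (real N - 1) * s powr \<alpha> = s powr (K - 1)"
      unfolding K_def by (simp add: powr_add[symmetric] algebra_simps)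
    have e2: "\<bar>U s\<bar> powr (p - 1) * U s = U s powr p"
      using Us by (simp add: powr_diff)
    show ?thesis using D K0 unfolding e1 e2 by (simp add: algebra_simps)
  qed
  have psi_inc: "\<psi> s \<le> \<psi> s1" if "0 < s" "s \<le> s1" "s1 < T" for s s1
  proof (rule DERIV_nonneg_imp_increasing_open[OF that(2)])
    fix x assume x: "s < x" "x < s1"
    then have xT: "0 < x" "x < T" using that by auto
    have "0 < U x" using pos xT by auto
    then have "U x powr p \<le> \<gamma> powr p" using Ule[of x] xT p by (intro powr_mono2) auto
    then show "\<exists>y. (\<psi> has_real_derivative y) (at x) \<and> 0 \<le> y"
      using psi_deriv[OF xT] by (intro exI[of _ _]) (auto intro!: mult_nonneg_nonneg)
  next
    show "continuous_on {s..s1} \<psi>"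
    proof (intro continuous_at_imp_continuous_on ballI)
      fix x assume "x \<in> {s..s1}"
      then show "isCont \<psi> x" using that by (intro DERIV_isCont[OF psi_deriv]) auto
    qed
  qed
  have psi_ge: "\<psi> s \<ge> 0" if s: "0 < s" "s < T" for s
  proof (rule ccontr)
    assume "\<not> \<psi> s \<ge> 0"
    then have ps: "\<psi> s < 0" by simp
    have "\<forall>x\<in>{0<..s}. U' x \<le> - (- \<psi> s)"
    proof
      fix x assume x: "x \<in> {0<..s}"
      have "\<psi> x \<le> \<psi> s" using psi_inc[of x s] x s by auto
      moreover have "\<gamma> powr p * x powr K / K \<ge> 0" using K0 by simp
      ultimately have A: "x powr (real N - 1) * U' x \<le> \<psi> s" unfolding \<psi>_def h_def by linarith
      have x1: "0 < x powr (real N - 1)" "x powr (real N - 1) \<le> 1" using powN_le1[of x] x s T by auto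
      then have "U' x \<le> 0" using A ps by (smt (verit) mult_pos_pos)
      then have "U' x \<le> x powr (real N - 1) * U' x" using x1 by (simp add: mult_le_cancel_right1)
      then show "U' x \<le> - (- \<psi> s)" using A by linarith
    qed
    then show False using deriv0(1)[of s "- \<psi> s"] s T ps by auto
  qed
  have U'ge: "- (\<gamma> powr p * s powr (\<alpha> + 1) / K) \<le> U' s" if s: "0 < s" "s < T" for s
  proof -
    have "- (\<gamma> powr p * s powr K / K) \<le> s powr (real N - 1) * U' s"
      using psi_ge[OF s] unfolding \<psi>_def h_def by linarith
    moreover have "s powr K = s powr (real N - 1) * s powr (\<alpha> + 1)"
      unfolding K_def by (simp add: powr_add[symmetric] algebra_simps)
    ultimately have "s powr (real N - 1) * (- (\<gamma> powr p * s powr (\<alpha> + 1) / K)) \<le> s powr (real N - 1) * U' s"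
      by (simp add: algebra_simps)
    then show ?thesis by (rule mult_left_le_imp_le) (use powN_le1[of s] s T in auto)
  qed
  define \<phi> where "\<phi> s = U s + \<gamma> powr p * s powr (\<alpha> + 2) / (K * (\<alpha> + 2))" for s
  have "\<phi> 0 \<le> \<phi> T"
  proof (rule DERIV_nonneg_imp_increasing_open[OF less_imp_le[OF T(1)]])
    fix x assume x: "0 < x" "x < T"
    have D: "(\<phi> has_real_derivative U' x + \<gamma> powr p * ((\<alpha> + 2) * x powr (\<alpha> + 2 - 1)) / (K * (\<alpha> + 2))) (at x)"
      unfolding \<phi>_def[abs_def]
      by (intro DERIV_add dUat DERIV_cdivide DERIV_cmult has_real_derivative_powr) (use x T in auto)
    have "U' x + \<gamma> powr p * ((\<alpha> + 2) * x powr (\<alpha> + 2 - 1)) / (K * (\<alpha> + 2))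
        = U' x + \<gamma> powr p * x powr (\<alpha> + 1) / K"
    proof -
      have a2: "\<alpha> + 2 \<noteq> 0" "\<alpha> + 2 - 1 = \<alpha> + 1" using \<alpha> by auto
      have "\<gamma> powr p * ((\<alpha> + 2) * x powr (\<alpha> + 2 - 1)) / (K * (\<alpha> + 2)) = \<gamma> powr p * x powr (\<alpha> + 1) / K"
        unfolding a2(2) using a2(1) K0 by simp
      then show ?thesis by simp
    qed
    also have "\<dots> \<ge> 0" using U'ge[OF x] by linarith
    finally show "\<exists>y. (\<phi> has_real_derivative y) (at x) \<and> 0 \<le> y" using D by blast
  next
    have c1: "continuous_on {0..T} U" by (rule continuous_on_subset[OF cont]) (use T in auto)
    have c2: "continuous_on {0..T} (\<lambda>s. s powr (\<alpha> + 2))"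
      by (rule continuous_on_powr') (use \<alpha> in \<open>auto intro: continuous_intros\<close>)
    have "K * (\<alpha> + 2) \<noteq> 0" using K0 \<alpha> by simp
    then show "continuous_on {0..T} \<phi>"
      unfolding \<phi>_def by (intro continuous_on_add c1 continuous_on_divide continuous_on_mult continuous_on_const c2) auto
  qed
  then show ?thesis unfolding \<phi>_def K_def using g \<alpha> by simp
qed

lemma first_zone:
  assumes g: "U 0 = \<gamma>" "\<gamma> > 0" and r0: "0 \<le> r0" "r0 < 1"
    and cond: "\<gamma> powr (p - 1) * r0 powr (\<alpha> + 2) \<le> (real N + \<alpha>) * (\<alpha> + 2) / 2"
  shows "\<gamma> / 2 \<le> U r0"
proof -
  define K where "K = (real N + \<alpha>) * (\<alpha> + 2)"
  have K0: "K > 0" unfolding K_def using \<alpha> by simp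
  have key: "\<gamma> - \<gamma> powr p * T powr (\<alpha> + 2) / K \<ge> \<gamma> / 2" if T: "0 \<le> T" "T \<le> r0" for T
  proof -
    have "T powr (\<alpha> + 2) \<le> r0 powr (\<alpha> + 2)" using T \<alpha> by (intro powr_mono2) auto
    moreover have gp: "\<gamma> powr p = \<gamma> * \<gamma> powr (p - 1)"
    proof -
      have "\<gamma> powr (1 + (p - 1)) = \<gamma> powr 1 * \<gamma> powr (p - 1)" by (rule powr_add)
      then show ?thesis using g by simp
    qed
    ultimately have "\<gamma> powr p * T powr (\<alpha> + 2) \<le> \<gamma> * (\<gamma> powr (p - 1) * r0 powr (\<alpha> + 2))"
      using g by (simp add: mult_left_mono)
    also have "\<dots> \<le> \<gamma> * (K / 2)" using cond g unfolding K_def by (intro mult_left_mono) auto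
    finally have "\<gamma> powr p * T powr (\<alpha> + 2) / K \<le> \<gamma> / 2" using K0 by (simp add: divide_le_eq)
    then show ?thesis by linarith
  qed
  have pos: "\<forall>s\<in>{0..r0}. \<gamma> / 3 < U s"
  proof (rule ccontr)
    assume "\<not> (\<forall>s\<in>{0..r0}. \<gamma> / 3 < U s)"
    define A where "A = {s \<in> {0..r0}. U s \<le> \<gamma> / 3}"
    have Ane: "A \<noteq> {}" unfolding A_def using \<open>\<not> _\<close> by (auto simp: not_less)
    have Acl: "closed A" unfolding A_def
      by (intro continuous_on_closed_Collect_le continuous_on_subset[OF cont] continuous_on_const) (use r0 in auto)
    have Ab: "bdd_below A" unfolding A_def by auto
    define T where "T = Inf A"
    have TA: "T \<in> A" unfolding T_def by (rule closed_contains_Inf[OF Ane Ab Acl])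
    then have T: "0 \<le> T" "T \<le> r0" "U T \<le> \<gamma> / 3" unfolding A_def by auto
    have T0: "T \<noteq> 0" using T g by auto
    have "\<forall>s\<in>{0..<T}. U s > 0"
    proof
      fix s assume s: "s \<in> {0..<T}"
      have "s \<notin> A"
      proof
        assume "s \<in> A"
        then have "T \<le> s" unfolding T_def using Ab by (rule cInf_lower)
        then show False using s by simp
      qed
      then have "U s > \<gamma> / 3" using s T unfolding A_def by auto
      then show "U s > 0" using g by simp
    qed
    then have "\<gamma> - \<gamma> powr p * T powr (\<alpha> + 2) / K \<le> U T"
      unfolding K_def using T T0 r0 g by (intro est) auto
    then have "\<gamma> / 2 \<le> U T" using key[OF T(1,2)] by linarith
    then show False using T g by simp
  qed
  show ?thesis
  proof (cases "r0 = 0")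
    case True then show ?thesis using g by simp
  next
    case False
    have "\<forall>s\<in>{0..<r0}. U s > 0"
    proof
      fix s assume "s \<in> {0..<r0}"
      then have "\<gamma> / 3 < U s" using pos by auto
      then show "U s > 0" using g by linarith
    qed
    then have "\<gamma> - \<gamma> powr p * r0 powr (\<alpha> + 2) / K \<le> U r0"
      unfolding K_def using False r0 g by (intro est) auto
    then show ?thesis using key[of r0] r0 by linarith
  qed
qed

end

lemma mk_osc_sol:
  fixes N :: nat and p \<alpha> :: real and U U' U'' :: "real \<Rightarrow> real"
  assumes us: "usol N p \<alpha> U U' U''" and M3: "2 * (real N + \<alpha>) / (\<alpha> + 2) \<le> 3"
    and U0: "U 0 > 0" and U1: "U 1 = 0"
  defines "\<iota> \<equiv> 2 / (\<alpha> + 2)"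
  defines "c \<equiv> \<iota> powr (2 / (p - 1))"
  shows "osc_sol (\<lambda>t. c * U (t powr \<iota>)) (\<lambda>t. c * U' (t powr \<iota>) * (\<iota> * t powr (\<iota> - 1)))
     (\<lambda>t. c * (U'' (t powr \<iota>) * (\<iota> * t powr (\<iota> - 1)) * (\<iota> * t powr (\<iota> - 1))
        + U' (t powr \<iota>) * (\<iota> * ((\<iota> - 1) * t powr (\<iota> - 1 - 1)))))
     (2 * (real N + \<alpha>) / (\<alpha> + 2)) p"
proof -
  interpret usol N p \<alpha> U U' U'' by (rule us)
  have os: "osc (\<lambda>t. c * U (t powr \<iota>)) (\<lambda>t. c * U' (t powr \<iota>) * (\<iota> * t powr (\<iota> - 1)))
     (\<lambda>t. c * (U'' (t powr \<iota>) * (\<iota> * t powr (\<iota> - 1)) * (\<iota> * t powr (\<iota> - 1))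
        + U' (t powr \<iota>) * (\<iota> * ((\<iota> - 1) * t powr (\<iota> - 1 - 1)))))
     (2 * (real N + \<alpha>) / (\<alpha> + 2)) p"
    unfolding c_def \<iota>_def using N p \<alpha> M3 dU dU' ode by (rule transform)
  have i0: "\<iota> > 0" unfolding \<iota>_def using \<alpha> by simp
  have c0: "c > 0" unfolding c_def using i0 by simp
  have ia: "\<iota> * (\<alpha> + 2) = 2" unfolding \<iota>_def using \<alpha> by (simp add: field_simps)
  have cp: "c powr (p - 1) = \<iota>\<^sup>2"
  proof -
    have "2 / (p - 1) * (p - 1) = 2" using p by (simp add: field_simps)
    then have "c powr (p - 1) = \<iota> powr 2" unfolding c_def by (simp only: powr_powr)
    then show ?thesis using i0 by simp
  qed
  show ?thesis
  proof (rule osc_sol.intro[OF os], unfold_locales)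
    show "continuous_on {0..1} (\<lambda>t. c * U (t powr \<iota>))"
    proof (intro continuous_on_mult continuous_on_const continuous_on_compose2[OF cont])
      show "continuous_on {0..1} (\<lambda>t. t powr \<iota>)"
        by (rule continuous_on_powr') (use i0 in \<open>auto intro: continuous_intros\<close>)
      show "(\<lambda>t. t powr \<iota>) ` {0..1} \<subseteq> {0..1}" using i0 by (auto intro!: powr_le1)
    qed
    show "c * U (1 powr \<iota>) = 0" using U1 by simp
    show "0 < c * U (0 powr \<iota>)" using U0 c0 by simp
    fix t :: real assume t: "0 \<le> t" "t < 1" and le: "(c * U (0 powr \<iota>)) powr (p - 1) * t\<^sup>2 \<le> 2 * (real N + \<alpha>) / (\<alpha> + 2)"
    define r0 where "r0 = t powr \<iota>"
    have r0: "0 \<le> r0" "r0 < 1" unfolding r0_def using t i0 powr_less_mono2[of \<iota> t 1] by auto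
    have r0a: "r0 powr (\<alpha> + 2) = t\<^sup>2"
    proof -
      have "r0 powr (\<alpha> + 2) = t powr (\<iota> * (\<alpha> + 2))" unfolding r0_def by (simp add: powr_powr)
      also have "\<dots> = t\<^sup>2" unfolding ia using t by simp
      finally show ?thesis .
    qed
    have "(c * U 0) powr (p - 1) = \<iota>\<^sup>2 * U 0 powr (p - 1)" using c0 U0 cp by (simp add: powr_mult)
    then have "\<iota>\<^sup>2 * (U 0 powr (p - 1) * t\<^sup>2) \<le> \<iota> * (real N + \<alpha>)"
      using le by (simp add: \<iota>_def mult.assoc)
    then have "\<iota> * (U 0 powr (p - 1) * t\<^sup>2) \<le> real N + \<alpha>"
      using i0 by (simp add: power2_eq_square mult.assoc mult_le_cancel_left_pos)
    then have "\<iota> * (\<alpha> + 2) * (U 0 powr (p - 1) * t\<^sup>2) \<le> (real N + \<alpha>) * (\<alpha> + 2)"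
      using \<alpha> by (simp add: mult.commute mult.left_commute mult_right_mono)
    then have "U 0 powr (p - 1) * r0 powr (\<alpha> + 2) \<le> (real N + \<alpha>) * (\<alpha> + 2) / 2"
      unfolding ia r0a by simp
    then have "U 0 / 2 \<le> U r0" using U0 r0 by (intro first_zone) auto
    then show "c * U (0 powr \<iota>) / 2 \<le> c * U (t powr \<iota>)"
      using c0 unfolding r0_def by simp
  qed
qed


lemma zero_transport:
  assumes i0: "\<iota> > 0" and r: "r \<in> zeros01 U" and c: "c \<noteq> (0::real)"
  shows "r powr (1 / \<iota>) \<in> zeros01 (\<lambda>t. c * U (t powr \<iota>)) \<and> (r powr (1 / \<iota>)) powr \<iota> = r"
proof -
  have r01: "0 < r" "r \<le> 1" "U r = 0" using r unfolding zeros01_def by auto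
  have e: "(r powr (1 / \<iota>)) powr \<iota> = r" using i0 r01 by (simp add: powr_powr)
  have "r powr (1 / \<iota>) \<le> 1" using r01 i0 by (intro powr_le1) auto
  then show ?thesis using e r01 unfolding zeros01_def by auto
qed

lemma per_alpha:
  fixes N m :: nat and p \<alpha> Ms G \<delta> :: real and U U' U'' :: "real \<Rightarrow> real"
  assumes us: "usol N p \<alpha> U U' U''" and MMs: "2 * (real N + \<alpha>) / (\<alpha> + 2) \<le> Ms" and Ms3: "Ms \<le> 3"
    and U0: "U 0 > 0" and U1: "U 1 = 0" and nod: "num_nodal_sets U = m"
    and G1: "1 \<le> G" and Gp: "\<forall>g\<ge>G. 12 \<le> g powr (p - 1) \<and> Hf p Ms g < 1 / (2 * (2 * real m + 1))"
    and \<delta>: "\<delta> = min (1 / 2) (sqrt (2 / G powr (p - 1)))"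
  defines "\<iota> \<equiv> 2 / (\<alpha> + 2)"
  defines "V \<equiv> \<lambda>t. \<iota> powr (2 / (p - 1)) * U (t powr \<iota>)"
  shows "finite (zeros01 U) \<and> m \<le> card (zeros01 U) \<and> (\<forall>t\<in>zeros01 V. \<delta> \<le> t) \<and> (\<forall>r\<in>zeros01 U. \<delta> powr \<iota> \<le> r)"
proof -
  interpret usol N p \<alpha> U U' U'' by (rule us)
  define c where "c = \<iota> powr (2 / (p - 1))"
  define M where "M = 2 * (real N + \<alpha>) / (\<alpha> + 2)"
  have i0: "\<iota> > 0" unfolding \<iota>_def using \<alpha> by simp
  have c0: "c > 0" unfolding c_def using i0 by simp
  have Vc: "V = (\<lambda>t. c * U (t powr \<iota>))" unfolding V_def c_def ..
  interpret S: osc_sol V "\<lambda>t. c * U' (t powr \<iota>) * (\<iota> * t powr (\<iota> - 1))"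
     "\<lambda>t. c * (U'' (t powr \<iota>) * (\<iota> * t powr (\<iota> - 1)) * (\<iota> * t powr (\<iota> - 1))
        + U' (t powr \<iota>) * (\<iota> * ((\<iota> - 1) * t powr (\<iota> - 1 - 1))))" M p
    unfolding Vc c_def \<iota>_def M_def using MMs Ms3 U0 U1 by (intro mk_osc_sol us) auto
  have finV: "finite (zeros01 V)" by (rule S.zeros_finite)
  have Usub: "zeros01 U \<subseteq> (\<lambda>t. t powr \<iota>) ` zeros01 V"
  proof
    fix r assume r: "r \<in> zeros01 U"
    then have "r powr (1 / \<iota>) \<in> zeros01 V \<and> (r powr (1 / \<iota>)) powr \<iota> = r"
      unfolding Vc using zero_transport[OF i0 r] c0 by auto
    then show "r \<in> (\<lambda>t. t powr \<iota>) ` zeros01 V" by (metis image_eqI)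
  qed
  have finU: "finite (zeros01 U)" using finite_subset[OF Usub] finV by auto
  have cl: "finite (components {r \<in> {0..<1}. U r \<noteq> 0}) \<and> card (components {r \<in> {0..<1}. U r \<noteq> 0}) \<le> card (zeros01 U)"
    by (rule comp_le[OF cont U1 finU])
  have cm: "card (components {r \<in> {0..<1}. U r \<noteq> 0}) = m" using nod unfolding num_nodal_sets_def .
  have mcard: "m \<le> card (zeros01 U)" using cl cm by simp
  have gG: "V 0 < G"
  proof (rule ccontr)
    assume "\<not> V 0 < G"
    then have g: "G \<le> V 0" by simp
    have "M \<le> Ms" unfolding M_def by (rule MMs)
    moreover have "1 \<le> V 0" using g G1 by simp
    moreover have "12 \<le> V 0 powr (p - 1)" "Hf p Ms (V 0) < 1 / (2 * (2 * real m + 1))" using Gp g by auto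
    ultimately obtain x where x: "x 0 = 0" "\<forall>i\<le>m. 0 \<le> x i \<and> x i < 1 \<and> V (x i) \<noteq> 0"
        "\<forall>i<m. \<exists>z. x i < z \<and> z < x (Suc i) \<and> V z = 0"
      using S.many_zeros[of Ms m] by blast
    define y where "y i = x i powr \<iota>" for i
    have yS: "y i \<in> {r \<in> {0..<1}. U r \<noteq> 0}" if "i \<le> m" for i
    proof -
      have "0 \<le> x i" "x i < 1" "V (x i) \<noteq> 0" using x that by auto
      then show ?thesis unfolding y_def Vc using i0 powr_less_mono2[of \<iota> "x i" 1] by auto
    qed
    have yz: "\<exists>z. y i < z \<and> z < y (Suc i) \<and> U z = 0" if im: "i < m" for i
    proof -
      obtain z where z: "x i < z" "z < x (Suc i)" "V z = 0" using x im by auto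
      have xi0: "0 \<le> x i" using x im by auto
      show ?thesis
      proof (intro exI conjI)
        show "y i < z powr \<iota>" unfolding y_def using z xi0 i0 by (intro powr_less_mono2) auto
        show "z powr \<iota> < y (Suc i)" unfolding y_def using z xi0 i0 by (intro powr_less_mono2) auto
        show "U (z powr \<iota>) = 0" using z c0 unfolding Vc by simp
      qed
    qed
    have "m + 1 \<le> card (components {r \<in> {0..<1}. U r \<noteq> 0})"
      using comp_ge[of U m y] cl yS yz by blast
    then show False using cm by simp
  qed
  have \<delta>le: "\<delta> \<le> t" if t: "t \<in> zeros01 V" for t
  proof -
    have t01: "0 < t" "t \<le> 1" "V t = 0" using t unfolding zeros01_def by auto
    have d12: "\<delta> \<le> 1 / 2" unfolding \<delta> by simp
    have "t = 1 \<or> S.s0 \<le> t" using S.zeros_ge t01 by blast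
    moreover have "\<delta> \<le> S.s0"
    proof -
      have V0: "0 < V 0" by (rule S.V0)
      have "V 0 powr (p - 1) \<le> G powr (p - 1)" using V0 gG p by (intro powr_mono2) auto
      moreover have "V 0 powr (p - 1) > 0" using V0 by simp
      ultimately have "2 / G powr (p - 1) \<le> M / V 0 powr (p - 1)"
        using S.M2 by (intro frac_le) auto
      then have "sqrt (2 / G powr (p - 1)) \<le> S.s0" unfolding S.s0_def by simp
      then show ?thesis unfolding \<delta> by simp
    qed
    ultimately show ?thesis using d12 by auto
  qed
  have rle: "\<delta> powr \<iota> \<le> r" if r: "r \<in> zeros01 U" for r
  proof -
    have tr: "r powr (1 / \<iota>) \<in> zeros01 V" "(r powr (1 / \<iota>)) powr \<iota> = r"
      unfolding Vc using zero_transport[OF i0 r] c0 by auto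
    have d0: "0 \<le> \<delta>" unfolding \<delta> by simp
    have "\<delta> powr \<iota> \<le> (r powr (1 / \<iota>)) powr \<iota>"
      using \<delta>le[OF tr(1)] d0 i0 by (intro powr_mono2) auto
    then show ?thesis using tr(2) by simp
  qed
  show ?thesis using finU mcard \<delta>le rle by blast
qed


theorem lemma4p1:
  fixes N m :: nat and p :: real and u :: "real \<Rightarrow> real \<Rightarrow> real"
  assumes "N \<ge> 3" and "p > 1"
    and sol: "\<And>\<alpha>. \<alpha> > alpha_p N p \<Longrightarrow>
               radial_henon_sol N p \<alpha> (u \<alpha>) \<and> num_nodal_sets (u \<alpha>) = m \<and> u \<alpha> 0 > 0"
  defines "v \<equiv> (\<lambda>\<alpha> t. (2 / (\<alpha> + 2)) powr (2 / (p - 1)) * u \<alpha> (t powr (2 / (\<alpha> + 2))))"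
  shows "(\<exists>\<delta> \<alpha>0. 0 < \<delta> \<and> \<delta> < 1 \<and> \<alpha>0 > alpha_p N p \<and>
            (\<forall>\<alpha> \<ge> \<alpha>0. \<delta> \<le> Inf (zeros01 (v \<alpha>))))
       \<and> (\<forall>i \<in> {1..m}. ((\<lambda>\<alpha>. ith_zero (u \<alpha>) i) \<longlongrightarrow> 1) at_top)"
proof -
  note N3 = assms(1) and p = assms(2)
  define \<eta> where "\<eta> = min 1 (1 / (2 * (p - 1)))"
  have \<eta>0: "0 < \<eta>" "\<eta> \<le> 1" unfolding \<eta>_def using p by auto
  have \<eta>p: "\<eta> * (p - 1) \<le> 1 / 2"
  proof -
    have "\<eta> \<le> 1 / (2 * (p - 1))" unfolding \<eta>_def by simp
    then have "\<eta> * (p - 1) \<le> 1 / (2 * (p - 1)) * (p - 1)" using p by (intro mult_right_mono) auto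
    also have "\<dots> = 1 / 2" using p by simp
    finally show ?thesis .
  qed
  define Ms where "Ms = 2 + \<eta>"
  have Ms3: "Ms \<le> 3" unfolding Ms_def using \<eta>0 by simp
  have b: "p + 1 - (p - 1) * (Ms - 1) > 0"
  proof -
    have "p + 1 - (p - 1) * (Ms - 1) = 2 - \<eta> * (p - 1)" unfolding Ms_def by (simp add: algebra_simps)
    then show ?thesis using \<eta>p by simp
  qed
  have Hl: "(Hf p Ms \<longlongrightarrow> 0) at_top" using Hf_lim[OF p b] .
  define hh where "hh = 1 / (2 * (2 * real m + 1))"
  have hh0: "hh > 0" unfolding hh_def by simp
  have ev1: "\<forall>\<^sub>F g in at_top. Hf p Ms g < hh" using order_tendstoD(2)[OF Hl hh0] .
  have ev2: "\<forall>\<^sub>F g in at_top. 12 \<le> g powr (p - 1)"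
    using powr_at_top_pos[of "p - 1"] p unfolding filterlim_at_top by auto
  obtain G0 where G0: "\<And>g. g \<ge> G0 \<Longrightarrow> 12 \<le> g powr (p - 1) \<and> Hf p Ms g < hh"
    using eventually_conj[OF ev2 ev1] unfolding eventually_at_top_linorder by blast
  define G where "G = max G0 1"
  have G1: "1 \<le> G" unfolding G_def by simp
  have Gp: "\<forall>g\<ge>G. 12 \<le> g powr (p - 1) \<and> Hf p Ms g < 1 / (2 * (2 * real m + 1))"
    using G0 unfolding G_def hh_def by auto
  define \<delta> where "\<delta> = min (1 / 2) (sqrt (2 / G powr (p - 1)))"
  have \<delta>0: "0 < \<delta>" "\<delta> < 1" unfolding \<delta>_def using G1 by auto
  define \<alpha>0 where "\<alpha>0 = max (alpha_p N p + 1) (2 * (real N - 2) / \<eta>)"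
  have ap0: "alpha_p N p \<ge> 0" unfolding alpha_p_def by simp
  have a0: "\<alpha>0 > alpha_p N p" unfolding \<alpha>0_def by simp
  have main: "finite (zeros01 (u \<alpha>)) \<and> m \<le> card (zeros01 (u \<alpha>)) \<and> (\<forall>t\<in>zeros01 (v \<alpha>). \<delta> \<le> t)
      \<and> (\<forall>r\<in>zeros01 (u \<alpha>). \<delta> powr (2 / (\<alpha> + 2)) \<le> r) \<and> u \<alpha> 1 = 0"
    if a: "\<alpha> \<ge> \<alpha>0" for \<alpha>
  proof -
    have aap: "\<alpha> > alpha_p N p" using a a0 by simp
    have apos: "\<alpha> > 0" using aap ap0 by simp
    have S: "radial_henon_sol N p \<alpha> (u \<alpha>)" "num_nodal_sets (u \<alpha>) = m" "u \<alpha> 0 > 0"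
      using sol[OF aap] by auto
    obtain U' U'' where UU: "continuous_on {0..1} (u \<alpha>)" "u \<alpha> 1 = 0"
      "\<forall>r\<in>{0..<1}. (u \<alpha> has_real_derivative U' r) (at r within {0..<1})" "U' 0 = 0"
      "\<forall>r\<in>{0<..<1}. (U' has_real_derivative U'' r) (at r)"
      "\<forall>r\<in>{0<..<1}. U'' r + (real N - 1) / r * U' r + r powr \<alpha> * \<bar>u \<alpha> r\<bar> powr (p - 1) * u \<alpha> r = 0"
      using S(1) unfolding radial_henon_sol_def by blast
    have us: "usol N p \<alpha> (u \<alpha>) U' U''"
      using N3 p apos UU by unfold_locales auto
    have MMs: "2 * (real N + \<alpha>) / (\<alpha> + 2) \<le> Ms"
    proof -
      have "2 * (real N - 2) / \<eta> \<le> \<alpha>" using a unfolding \<alpha>0_def by simp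
      then have "2 * (real N - 2) \<le> \<alpha> * \<eta>" using \<eta>0 by (simp add: divide_le_eq)
      then have "2 * (real N + \<alpha>) \<le> Ms * (\<alpha> + 2)" unfolding Ms_def using \<eta>0 by (simp add: algebra_simps)
      then show ?thesis using apos by (simp add: divide_le_eq)
    qed
    have "finite (zeros01 (u \<alpha>)) \<and> m \<le> card (zeros01 (u \<alpha>)) \<and>
        (\<forall>t\<in>zeros01 (\<lambda>t. (2 / (\<alpha> + 2)) powr (2 / (p - 1)) * u \<alpha> (t powr (2 / (\<alpha> + 2)))). \<delta> \<le> t) \<and>
        (\<forall>r\<in>zeros01 (u \<alpha>). \<delta> powr (2 / (\<alpha> + 2)) \<le> r)"
      by (rule per_alpha[OF us MMs Ms3 S(3) UU(2) S(2) G1 Gp \<delta>_def])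
    then show ?thesis unfolding v_def using UU(2) by simp
  qed
  have part1: "\<forall>\<alpha> \<ge> \<alpha>0. \<delta> \<le> Inf (zeros01 (v \<alpha>))"
  proof (intro allI impI)
    fix \<alpha> assume a: "\<alpha> \<ge> \<alpha>0"
    have "1 \<in> zeros01 (v \<alpha>)" using main[OF a] unfolding zeros01_def v_def by simp
    then have "zeros01 (v \<alpha>) \<noteq> {}" by auto
    then show "\<delta> \<le> Inf (zeros01 (v \<alpha>))" using main[OF a] by (intro cInf_greatest) auto
  qed
  have part2: "((\<lambda>\<alpha>. ith_zero (u \<alpha>) i) \<longlongrightarrow> 1) at_top" if i: "i \<in> {1..m}" for i
  proof (rule tendsto_sandwich)
    have fl: "filterlim (\<lambda>\<alpha>::real. \<alpha> + 2) at_top at_top"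
      using filterlim_tendsto_add_at_top[OF tendsto_const[of "2::real"] filterlim_ident] by (simp add: add.commute)
    have lim0: "((\<lambda>\<alpha>::real. 2 / (\<alpha> + 2)) \<longlongrightarrow> 0) at_top"
      by (intro tendsto_divide_0[OF tendsto_const] filterlim_at_top_imp_at_infinity fl)
    have "((\<lambda>\<alpha>::real. \<delta> powr (2 / (\<alpha> + 2))) \<longlongrightarrow> \<delta> powr 0) at_top"
      using \<delta>0 by (intro tendsto_powr tendsto_const lim0) auto
    then show "((\<lambda>\<alpha>::real. \<delta> powr (2 / (\<alpha> + 2))) \<longlongrightarrow> 1) at_top" using \<delta>0 by simp
    show "((\<lambda>\<alpha>::real. 1) \<longlongrightarrow> 1) at_top" by simp
    have mem: "ith_zero (u \<alpha>) i \<in> zeros01 (u \<alpha>)" if a: "\<alpha> \<ge> \<alpha>0" for \<alpha>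
    proof -
      have fin: "finite (zeros01 (u \<alpha>))" and mc: "m \<le> card (zeros01 (u \<alpha>))" using main[OF a] by auto
      have "i - 1 < length (sorted_list_of_set (zeros01 (u \<alpha>)))" using i mc fin by auto
      then have "sorted_list_of_set (zeros01 (u \<alpha>)) ! (i - 1) \<in> set (sorted_list_of_set (zeros01 (u \<alpha>)))"
        by (rule nth_mem)
      then show ?thesis unfolding ith_zero_def using fin by simp
    qed
    show "\<forall>\<^sub>F \<alpha> in at_top. \<delta> powr (2 / (\<alpha> + 2)) \<le> ith_zero (u \<alpha>) i"
      unfolding eventually_at_top_linorder
    proof (intro exI[of _ \<alpha>0] allI impI)
      fix \<alpha> assume a: "\<alpha> \<ge> \<alpha>0"
      have "\<forall>r\<in>zeros01 (u \<alpha>). \<delta> powr (2 / (\<alpha> + 2)) \<le> r" using main[OF a] by blast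
      then show "\<delta> powr (2 / (\<alpha> + 2)) \<le> ith_zero (u \<alpha>) i" using mem[OF a] by blast
    qed
    show "\<forall>\<^sub>F \<alpha> in at_top. ith_zero (u \<alpha>) i \<le> 1"
      unfolding eventually_at_top_linorder
    proof (intro exI[of _ \<alpha>0] allI impI)
      fix \<alpha> assume a: "\<alpha> \<ge> \<alpha>0"
      show "ith_zero (u \<alpha>) i \<le> 1" using mem[OF a] unfolding zeros01_def by simp
    qed
  qed
  show ?thesis
  proof (intro conjI)
    show "\<exists>\<delta> \<alpha>0. 0 < \<delta> \<and> \<delta> < 1 \<and> \<alpha>0 > alpha_p N p \<and> (\<forall>\<alpha> \<ge> \<alpha>0. \<delta> \<le> Inf (zeros01 (v \<alpha>)))"
      using part1 \<delta>0 a0 by blast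
    show "\<forall>i \<in> {1..m}. ((\<lambda>\<alpha>. ith_zero (u \<alpha>) i) \<longlongrightarrow> 1) at_top"
      using part2 by blast
  qed
qed


end
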